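(* Let $F_*$ be the category of finite sets, with the injective maps as cofibrations and the bijections as weak equivalences. Then $F_*$ is a pre-cylinder category, and it is the free pre-cylinder category on one object $*$ (the singleton): for every pre-cylinder category $\mathcal D$, evaluation at the singleton gives an equivalence, natural in $\mathcal D$, between the category of morphisms of pre-cylinder categories $F_*\to\mathcal D$ (with natural transformations) and $\mathcal D$; the morphism corresponding to $X\in\mathcal D$ sends a finite set $S$ to the coproduct $\coprod_{s\in S}X$.
   Context: A cofibration category is a category with a class of maps called cofibrations such that isomorphisms are cofibrations, cofibrations are closed under composition, there is an initial object $0$ with every $0\to X$ a cofibration, and pushouts of cofibrations along arbitrary maps exist and are cofibrations. A pre-cylinder category is a cofibration category with an additional class of maps, the weak equivalences, containing isomorphisms, closed under composition, satisfying 2-out-of-6 (if $f,g,h$ composable with $f\circ g$ and $g\circ h$ weak equivalences then $f,g,h,f\circ g\circ h$ are) and the cube lemma: given a natural transformation between spans $B\leftarrow A\rightarrow C$ and $B'\leftarrow A'\rightarrow C'$ whose left legs $A\hookrightarrow B$, $A'\hookrightarrow B'$ are cofibrations and whose three components are weak equivalences, the induced map $B\sqcup_AC\to B'\sqcup_{A'}C'$ is a weak equivalence. A morphism of pre-cylinder categories is a functor preserving cofibrations, weak equivalences, the initial object and pushouts along cofibrations. *)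

theory Defs
  imports Main "HOL-Library.FuncSet"
begin

record ('o,'a) cat =
  obj :: "'o set"
  arr :: "'a set"
  dom :: "'a \<Rightarrow> 'o"
  cod :: "'a \<Rightarrow> 'o"
  cmp :: "'a \<Rightarrow> 'a \<Rightarrow> 'a"   (* cmp C g f = g o f *)
  idt :: "'o \<Rightarrow> 'a"

definition hom :: "('o,'a,'z) cat_scheme \<Rightarrow> 'o \<Rightarrow> 'o \<Rightarrow> 'a set" where
  "hom C X Y = {f \<in> arr C. dom C f = X \<and> cod C f = Y}"

definition category :: "('o,'a,'z) cat_scheme \<Rightarrow> bool" where
  "category C \<longleftrightarrow>
     (\<forall>f\<in>arr C. dom C f \<in> obj C \<and> cod C f \<in> obj C) \<and>
     (\<forall>X\<in>obj C. idt C X \<in> hom C X X) \<and>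
     (\<forall>f\<in>arr C. \<forall>g\<in>arr C. cod C f = dom C g \<longrightarrow> cmp C g f \<in> hom C (dom C f) (cod C g)) \<and>
     (\<forall>f\<in>arr C. cmp C f (idt C (dom C f)) = f \<and> cmp C (idt C (cod C f)) f = f) \<and>
     (\<forall>f\<in>arr C. \<forall>g\<in>arr C. \<forall>h\<in>arr C. cod C f = dom C g \<longrightarrow> cod C g = dom C h \<longrightarrow>
        cmp C h (cmp C g f) = cmp C (cmp C h g) f)"

definition iso :: "('o,'a,'z) cat_scheme \<Rightarrow> 'a \<Rightarrow> bool" where
  "iso C f \<longleftrightarrow> f \<in> arr C \<and> (\<exists>g \<in> hom C (cod C f) (dom C f).
       cmp C g f = idt C (dom C f) \<and> cmp C f g = idt C (cod C f))"

definition initial :: "('o,'a,'z) cat_scheme \<Rightarrow> 'o \<Rightarrow> bool" where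
  "initial C I \<longleftrightarrow> I \<in> obj C \<and> (\<forall>X\<in>obj C. \<exists>!f. f \<in> hom C I X)"

definition pushout :: "('o,'a,'z) cat_scheme \<Rightarrow> 'a \<Rightarrow> 'a \<Rightarrow> 'a \<Rightarrow> 'a \<Rightarrow> bool" where
  "pushout C i f j k \<longleftrightarrow>
     i \<in> arr C \<and> f \<in> arr C \<and> j \<in> arr C \<and> k \<in> arr C \<and>
     dom C i = dom C f \<and> dom C j = cod C i \<and> dom C k = cod C f \<and> cod C j = cod C k \<and>
     cmp C j i = cmp C k f \<and>
     (\<forall>Q\<in>obj C. \<forall>u\<in>hom C (cod C i) Q. \<forall>v\<in>hom C (cod C f) Q.
        cmp C u i = cmp C v f \<longrightarrow>
        (\<exists>!h. h \<in> hom C (cod C j) Q \<and> cmp C h j = u \<and> cmp C h k = v))"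

definition coproduct :: "('o,'a,'z) cat_scheme \<Rightarrow> ('i \<Rightarrow> 'o) \<Rightarrow> 'i set \<Rightarrow> 'o \<Rightarrow> ('i \<Rightarrow> 'a) \<Rightarrow> bool" where
  "coproduct C Xs I P j \<longleftrightarrow>
     P \<in> obj C \<and> (\<forall>s\<in>I. Xs s \<in> obj C \<and> j s \<in> hom C (Xs s) P) \<and>
     (\<forall>Y\<in>obj C. \<forall>g. (\<forall>s\<in>I. g s \<in> hom C (Xs s) Y) \<longrightarrow>
        (\<exists>!h. h \<in> hom C P Y \<and> (\<forall>s\<in>I. cmp C h (j s) = g s)))"

record ('o,'a) pccat = "('o,'a) cat" +
  cof :: "'a set"
  weq :: "'a set"

definition cofibration_category :: "('o,'a,'z) pccat_scheme \<Rightarrow> bool" where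
  "cofibration_category C \<longleftrightarrow>
     category C \<and> cof C \<subseteq> arr C \<and>
     (\<forall>f. iso C f \<longrightarrow> f \<in> cof C) \<and>
     (\<forall>f\<in>cof C. \<forall>g\<in>cof C. cod C f = dom C g \<longrightarrow> cmp C g f \<in> cof C) \<and>
     (\<exists>I. initial C I \<and> (\<forall>X\<in>obj C. \<forall>f\<in>hom C I X. f \<in> cof C)) \<and>
     (\<forall>i\<in>cof C. \<forall>f\<in>arr C. dom C f = dom C i \<longrightarrow> (\<exists>j k. pushout C i f j k)) \<and>
     (\<forall>i f j k. pushout C i f j k \<longrightarrow> i \<in> cof C \<longrightarrow> k \<in> cof C)"

definition pre_cylinder_category :: "('o,'a,'z) pccat_scheme \<Rightarrow> bool" where
  "pre_cylinder_category C \<longleftrightarrow>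
     cofibration_category C \<and> weq C \<subseteq> arr C \<and>
     (\<forall>f. iso C f \<longrightarrow> f \<in> weq C) \<and>
     (\<forall>f\<in>weq C. \<forall>g\<in>weq C. cod C f = dom C g \<longrightarrow> cmp C g f \<in> weq C) \<and>
     \<comment> \<open>2-out-of-6 for composable h, g, f (f o g o h)\<close>
     (\<forall>f\<in>arr C. \<forall>g\<in>arr C. \<forall>h\<in>arr C. cod C h = dom C g \<longrightarrow> cod C g = dom C f \<longrightarrow>
        cmp C f g \<in> weq C \<longrightarrow> cmp C g h \<in> weq C \<longrightarrow>
        f \<in> weq C \<and> g \<in> weq C \<and> h \<in> weq C \<and> cmp C f (cmp C g h) \<in> weq C) \<and>
     \<comment> \<open>cube lemma\<close>
     (\<forall>i f j k i' f' j' k' a b c u.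
        pushout C i f j k \<longrightarrow> pushout C i' f' j' k' \<longrightarrow> i \<in> cof C \<longrightarrow> i' \<in> cof C \<longrightarrow>
        a \<in> hom C (dom C i) (dom C i') \<longrightarrow> b \<in> hom C (cod C i) (cod C i') \<longrightarrow>
        c \<in> hom C (cod C f) (cod C f') \<longrightarrow>
        a \<in> weq C \<longrightarrow> b \<in> weq C \<longrightarrow> c \<in> weq C \<longrightarrow>
        cmp C b i = cmp C i' a \<longrightarrow> cmp C c f = cmp C f' a \<longrightarrow>
        u \<in> hom C (cod C j) (cod C j') \<longrightarrow> cmp C u j = cmp C j' b \<longrightarrow> cmp C u k = cmp C k' c \<longrightarrow>
        u \<in> weq C)"

type_synonym ('o1,'a1,'o2,'a2) ftor = "('o1 \<Rightarrow> 'o2) \<times> ('a1 \<Rightarrow> 'a2)"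

abbreviation fobj :: "('o1,'a1,'o2,'a2) ftor \<Rightarrow> 'o1 \<Rightarrow> 'o2" where "fobj F \<equiv> fst F"
abbreviation farr :: "('o1,'a1,'o2,'a2) ftor \<Rightarrow> 'a1 \<Rightarrow> 'a2" where "farr F \<equiv> snd F"

definition is_functor :: "('o1,'a1,'z1) cat_scheme \<Rightarrow> ('o2,'a2,'z2) cat_scheme \<Rightarrow> ('o1,'a1,'o2,'a2) ftor \<Rightarrow> bool" where
  "is_functor C D F \<longleftrightarrow>
     (\<forall>X\<in>obj C. fobj F X \<in> obj D) \<and>
     (\<forall>f\<in>arr C. farr F f \<in> hom D (fobj F (dom C f)) (fobj F (cod C f))) \<and>
     (\<forall>X\<in>obj C. farr F (idt C X) = idt D (fobj F X)) \<and>
     (\<forall>f\<in>arr C. \<forall>g\<in>arr C. cod C f = dom C g \<longrightarrow> farr F (cmp C g f) = cmp D (farr F g) (farr F f)) \<and>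
     (\<forall>X. X \<notin> obj C \<longrightarrow> fobj F X = undefined) \<and>
     (\<forall>f. f \<notin> arr C \<longrightarrow> farr F f = undefined)"

definition idf :: "('o,'a,'z) cat_scheme \<Rightarrow> ('o,'a,'o,'a) ftor" where
  "idf C = (\<lambda>X. if X \<in> obj C then X else undefined, \<lambda>f. if f \<in> arr C then f else undefined)"

definition fcompose :: "('o1,'a1,'z1) cat_scheme \<Rightarrow> ('o2,'a2,'o3,'a3) ftor \<Rightarrow> ('o1,'a1,'o2,'a2) ftor
    \<Rightarrow> ('o1,'a1,'o3,'a3) ftor" where
  "fcompose C G F = (\<lambda>X. if X \<in> obj C then fobj G (fobj F X) else undefined,
                  \<lambda>f. if f \<in> arr C then farr G (farr F f) else undefined)"

definition natural :: "('o1,'a1,'z1) cat_scheme \<Rightarrow> ('o2,'a2,'z2) cat_scheme \<Rightarrow>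
    ('o1,'a1,'o2,'a2) ftor \<Rightarrow> ('o1,'a1,'o2,'a2) ftor \<Rightarrow> ('o1 \<Rightarrow> 'a2) \<Rightarrow> bool" where
  "natural C D F G \<eta> \<longleftrightarrow>
     (\<forall>X\<in>obj C. \<eta> X \<in> hom D (fobj F X) (fobj G X)) \<and>
     (\<forall>f\<in>arr C. cmp D (\<eta> (cod C f)) (farr F f) = cmp D (farr G f) (\<eta> (dom C f))) \<and>
     (\<forall>X. X \<notin> obj C \<longrightarrow> \<eta> X = undefined)"

definition natiso :: "('o1,'a1,'z1) cat_scheme \<Rightarrow> ('o2,'a2,'z2) cat_scheme \<Rightarrow>
    ('o1,'a1,'o2,'a2) ftor \<Rightarrow> ('o1,'a1,'o2,'a2) ftor \<Rightarrow> ('o1 \<Rightarrow> 'a2) \<Rightarrow> bool" where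
  "natiso C D F G \<eta> \<longleftrightarrow> natural C D F G \<eta> \<and> (\<forall>X\<in>obj C. iso D (\<eta> X))"

definition funcat :: "('o1,'a1,'z1) cat_scheme \<Rightarrow> ('o2,'a2,'z2) cat_scheme \<Rightarrow>
    ('o1,'a1,'o2,'a2) ftor set \<Rightarrow>
    (('o1,'a1,'o2,'a2) ftor,
     ('o1,'a1,'o2,'a2) ftor \<times> ('o1,'a1,'o2,'a2) ftor \<times> ('o1 \<Rightarrow> 'a2)) cat" where
  "funcat C D S =
    \<lparr> obj = S,
      arr = {(F, G, \<eta>). F \<in> S \<and> G \<in> S \<and> natural C D F G \<eta>},
      dom = (\<lambda>(F, G, \<eta>). F),
      cod = (\<lambda>(F, G, \<eta>). G),
      cmp = (\<lambda>(G', H, \<theta>) (F, G, \<eta>). (F, H, \<lambda>X. if X \<in> obj C then cmp D (\<theta> X) (\<eta> X) else undefined)),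
      idt = (\<lambda>F. (F, F, \<lambda>X. if X \<in> obj C then idt D (fobj F X) else undefined)) \<rparr>"

definition quasi_inverse :: "('o1,'a1,'z1) cat_scheme \<Rightarrow> ('o2,'a2,'z2) cat_scheme \<Rightarrow>
    ('o1,'a1,'o2,'a2) ftor \<Rightarrow> ('o2,'a2,'o1,'a1) ftor \<Rightarrow> bool" where
  "quasi_inverse C D F G \<longleftrightarrow>
     is_functor D C G \<and>
     (\<exists>\<eta>. natiso C C (idf C) (fcompose C G F) \<eta>) \<and>
     (\<exists>\<epsilon>. natiso D D (fcompose D F G) (idf D) \<epsilon>)"

definition equivalence_of_categories :: "('o1,'a1,'z1) cat_scheme \<Rightarrow> ('o2,'a2,'z2) cat_scheme \<Rightarrow>
    ('o1,'a1,'o2,'a2) ftor \<Rightarrow> bool" where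
  "equivalence_of_categories C D F \<longleftrightarrow> is_functor C D F \<and> (\<exists>G. quasi_inverse C D F G)"

definition pc_morphism :: "('o1,'a1,'z1) pccat_scheme \<Rightarrow> ('o2,'a2,'z2) pccat_scheme \<Rightarrow>
    ('o1,'a1,'o2,'a2) ftor \<Rightarrow> bool" where
  "pc_morphism C D F \<longleftrightarrow>
     is_functor C D F \<and>
     (\<forall>f\<in>cof C. farr F f \<in> cof D) \<and>
     (\<forall>f\<in>weq C. farr F f \<in> weq D) \<and>
     (\<forall>I. initial C I \<longrightarrow> initial D (fobj F I)) \<and>
     (\<forall>i f j k. pushout C i f j k \<longrightarrow> i \<in> cof C \<longrightarrow>
        pushout D (farr F i) (farr F f) (farr F j) (farr F k))"

definition PCMor where
  "PCMor C D = funcat C D {F. pc_morphism C D F}"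

text \<open>Objects: finite sets (of natural numbers, a skeleton-containing small model of the
  category of finite sets).  Arrows: triples (S, T, f) with f : S -> T extensional.\<close>
type_synonym finarr = "nat set \<times> nat set \<times> (nat \<Rightarrow> nat)"

definition FinSet :: "(nat set, finarr) pccat" where
  "FinSet =
    \<lparr> obj = {S. finite S},
      arr = {(S, T, f). finite S \<and> finite T \<and> f \<in> S \<rightarrow>\<^sub>E T},
      dom = (\<lambda>(S, T, f). S),
      cod = (\<lambda>(S, T, f). T),
      cmp = (\<lambda>(T', U, g) (S, T, f). (S, U, restrict (g \<circ> f) S)),
      idt = (\<lambda>S. (S, S, restrict id S)),
      cof = {(S, T, f). finite S \<and> finite T \<and> f \<in> S \<rightarrow>\<^sub>E T \<and> inj_on f S},
      weq = {(S, T, f). finite S \<and> finite T \<and> f \<in> S \<rightarrow>\<^sub>E T \<and> bij_betw f S T} \<rparr>"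

definition star :: "nat set" where "star = {0}"

definition evf :: "('o,'a,'z) pccat_scheme \<Rightarrow>
   ((nat set,finarr,'o,'a) ftor,
    (nat set,finarr,'o,'a) ftor \<times> (nat set,finarr,'o,'a) ftor \<times> (nat set \<Rightarrow> 'a),
    'o, 'a) ftor" where
  "evf D = (\<lambda>F. if F \<in> obj (PCMor FinSet D) then fobj F star else undefined,
            \<lambda>t. if t \<in> arr (PCMor FinSet D) then (snd (snd t)) star else undefined)"

definition postc :: "('o,'a,'z) pccat_scheme \<Rightarrow> ('o2,'a2,'z2) pccat_scheme \<Rightarrow>
    ('o,'a,'o2,'a2) ftor \<Rightarrow>
   ((nat set,finarr,'o,'a) ftor,
    (nat set,finarr,'o,'a) ftor \<times> (nat set,finarr,'o,'a) ftor \<times> (nat set \<Rightarrow> 'a),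
    (nat set,finarr,'o2,'a2) ftor,
    (nat set,finarr,'o2,'a2) ftor \<times> (nat set,finarr,'o2,'a2) ftor \<times> (nat set \<Rightarrow> 'a2)) ftor" where
  "postc D D' H =
    (\<lambda>F. if F \<in> obj (PCMor FinSet D) then fcompose FinSet H F else undefined,
     \<lambda>t. if t \<in> arr (PCMor FinSet D)
          then (fcompose FinSet H (fst t), fcompose FinSet H (fst (snd t)),
                \<lambda>X. if X \<in> obj FinSet then farr H (snd (snd t) X) else undefined)
          else undefined)"

end

theory Submission
  imports Defs
begin

lemma homI: "f \<in> arr C \<Longrightarrow> dom C f = X \<Longrightarrow> cod C f = Y \<Longrightarrow> f \<in> hom C X Y"
  by (simp add: hom_def)
lemma homD: "f \<in> hom C X Y \<Longrightarrow> f \<in> arr C \<and> dom C f = X \<and> cod C f = Y"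
  by (simp add: hom_def)

locale cat =
  fixes C :: "('o,'a,'z) cat_scheme"
  assumes cat: "category C"
begin

lemma hom_obj: "f \<in> hom C X Y \<Longrightarrow> X \<in> obj C \<and> Y \<in> obj C"
  using cat unfolding category_def hom_def by auto

lemma arr_hom: "f \<in> arr C \<Longrightarrow> f \<in> hom C (dom C f) (cod C f)"
  by (simp add: hom_def)

lemma comp_hom[intro]: "f \<in> hom C X Y \<Longrightarrow> g \<in> hom C Y Z \<Longrightarrow> cmp C g f \<in> hom C X Z"
  using cat unfolding category_def hom_def by auto

lemma id_hom[intro]: "X \<in> obj C \<Longrightarrow> idt C X \<in> hom C X X"
  using cat unfolding category_def by auto

lemma id_left: "f \<in> hom C X Y \<Longrightarrow> cmp C (idt C Y) f = f"
  using cat unfolding category_def hom_def by auto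

lemma id_right: "f \<in> hom C X Y \<Longrightarrow> cmp C f (idt C X) = f"
  using cat unfolding category_def hom_def by auto

lemma assoc: "f \<in> hom C X Y \<Longrightarrow> g \<in> hom C Y Z \<Longrightarrow> h \<in> hom C Z W \<Longrightarrow>
   cmp C h (cmp C g f) = cmp C (cmp C h g) f"
  using cat unfolding category_def hom_def by auto

lemma isoI: "f \<in> hom C X Y \<Longrightarrow> g \<in> hom C Y X \<Longrightarrow> cmp C g f = idt C X \<Longrightarrow> cmp C f g = idt C Y \<Longrightarrow> iso C f"
  unfolding iso_def hom_def by auto

lemma isoE: assumes "iso C f" "f \<in> hom C X Y"
  obtains g where "g \<in> hom C Y X" "cmp C g f = idt C X" "cmp C f g = idt C Y"
  using assms unfolding iso_def hom_def by auto

lemma iso_id: "X \<in> obj C \<Longrightarrow> iso C (idt C X)"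
  using isoI[of "idt C X" X X "idt C X"] id_left[OF id_hom] by auto

lemma iso_comp: assumes "iso C f" "f \<in> hom C X Y" "iso C g" "g \<in> hom C Y Z"
  shows "iso C (cmp C g f)"
proof -
  from isoE[OF assms(1,2)] obtain f' where f': "f' \<in> hom C Y X" "cmp C f' f = idt C X" "cmp C f f' = idt C Y" .
  from isoE[OF assms(3,4)] obtain g' where g': "g' \<in> hom C Z Y" "cmp C g' g = idt C Y" "cmp C g g' = idt C Z" .
  have "cmp C (cmp C f' g') (cmp C g f) = cmp C f' (cmp C g' (cmp C g f))"
    using assoc[OF comp_hom[OF assms(2) assms(4)] g'(1) f'(1)] by simp
  also have "cmp C g' (cmp C g f) = cmp C (cmp C g' g) f" using assoc[OF assms(2) assms(4) g'(1)] .
  also have "\<dots> = f" using g' id_left[OF assms(2)] by simp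
  finally have 1: "cmp C (cmp C f' g') (cmp C g f) = idt C X" using f' by simp
  have "cmp C (cmp C g f) (cmp C f' g') = cmp C g (cmp C f (cmp C f' g'))"
    using assoc[OF comp_hom[OF g'(1) f'(1)] assms(2) assms(4)] by simp
  also have "cmp C f (cmp C f' g') = cmp C (cmp C f f') g'" using assoc[OF g'(1) f'(1) assms(2)] .
  also have "\<dots> = g'" using f' id_left[OF g'(1)] by simp
  finally have 2: "cmp C (cmp C g f) (cmp C f' g') = idt C Z" using g' by simp
  show ?thesis by (rule isoI[OF _ _ 1 2]) (use assms f' g' in auto)
qed

lemma iso_cancel_right: assumes "iso C f" "f \<in> hom C X Y" "h1 \<in> hom C Y Z" "h2 \<in> hom C Y Z"
  "cmp C h1 f = cmp C h2 f" shows "h1 = h2"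
proof -
  from isoE[OF assms(1,2)] obtain f' where f': "f' \<in> hom C Y X" "cmp C f' f = idt C X" "cmp C f f' = idt C Y" .
  have "h1 = cmp C (cmp C h1 f) f'" using assoc[OF f'(1) assms(2) assms(3)] f' id_right[OF assms(3)] by simp
  also have "\<dots> = cmp C (cmp C h2 f) f'" using assms by simp
  also have "\<dots> = h2" using assoc[OF f'(1) assms(2) assms(4)] f' id_right[OF assms(4)] by simp
  finally show ?thesis .
qed

end

definition cind :: "('o,'a,'z) cat_scheme \<Rightarrow> 'o \<Rightarrow> ('i \<Rightarrow> 'a) \<Rightarrow> 'i set \<Rightarrow> 'o \<Rightarrow> ('i \<Rightarrow> 'a) \<Rightarrow> 'a" where
  "cind C P j I Q g = (THE h. h \<in> hom C P Q \<and> (\<forall>s\<in>I. cmp C h (j s) = g s))"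

definition bcop :: "('o,'a,'z) cat_scheme \<Rightarrow> 'o \<Rightarrow> 'o \<Rightarrow> 'o \<Rightarrow> 'a \<Rightarrow> 'a \<Rightarrow> bool" where
  "bcop C A B P p q \<longleftrightarrow> P \<in> obj C \<and> p \<in> hom C A P \<and> q \<in> hom C B P \<and>
    (\<forall>Q\<in>obj C. \<forall>u\<in>hom C A Q. \<forall>v\<in>hom C B Q. \<exists>!h. h \<in> hom C P Q \<and> cmp C h p = u \<and> cmp C h q = v)"

context cat begin

lemma cop_inj: "coproduct C Xs I P j \<Longrightarrow> s \<in> I \<Longrightarrow> j s \<in> hom C (Xs s) P"
  unfolding coproduct_def by auto

lemma cop_obj: "coproduct C Xs I P j \<Longrightarrow> P \<in> obj C"
  unfolding coproduct_def by auto

lemma cop_univ: assumes "coproduct C Xs I P j" "Y \<in> obj C" "\<forall>s\<in>I. g s \<in> hom C (Xs s) Y"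
  shows "\<exists>!h. h \<in> hom C P Y \<and> (\<forall>s\<in>I. cmp C h (j s) = g s)"
proof -
  have "\<forall>Y\<in>obj C. \<forall>g. (\<forall>s\<in>I. g s \<in> hom C (Xs s) Y) \<longrightarrow>
        (\<exists>!h. h \<in> hom C P Y \<and> (\<forall>s\<in>I. cmp C h (j s) = g s))"
    using assms(1) unfolding coproduct_def by (elim conjE)
  thus ?thesis using assms(2,3) by blast
qed

lemma cind: assumes "coproduct C Xs I P j" "Q \<in> obj C" "\<forall>s\<in>I. g s \<in> hom C (Xs s) Q"
  shows "cind C P j I Q g \<in> hom C P Q" "\<forall>s\<in>I. cmp C (cind C P j I Q g) (j s) = g s"
proof -
  have "\<exists>!h. h \<in> hom C P Q \<and> (\<forall>s\<in>I. cmp C h (j s) = g s)"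
    using cop_univ[OF assms] .
  from theI'[OF this] show "cind C P j I Q g \<in> hom C P Q" "\<forall>s\<in>I. cmp C (cind C P j I Q g) (j s) = g s"
    unfolding cind_def by auto
qed

lemma cind_unique: assumes "coproduct C Xs I P j" "h \<in> hom C P Q" "\<forall>s\<in>I. cmp C h (j s) = g s"
  shows "h = cind C P j I Q g"
proof -
  have Q: "Q \<in> obj C" using assms hom_obj by auto
  have g: "\<forall>s\<in>I. g s \<in> hom C (Xs s) Q" using assms(3) comp_hom[OF cop_inj[OF assms(1)] assms(2)] by auto
  have "\<exists>!h. h \<in> hom C P Q \<and> (\<forall>s\<in>I. cmp C h (j s) = g s)"
    using cop_univ[OF assms(1) Q g] .
  from the1_equality[OF this] show ?thesis unfolding cind_def using assms(2,3) by simp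
qed

lemma cop_ext: assumes "coproduct C Xs I P j" "h1 \<in> hom C P Q" "h2 \<in> hom C P Q"
  "\<forall>s\<in>I. cmp C h1 (j s) = cmp C h2 (j s)" shows "h1 = h2"
  using cind_unique[OF assms(1,2), of "\<lambda>s. cmp C h2 (j s)"] cind_unique[OF assms(1,3), of "\<lambda>s. cmp C h2 (j s)"] assms(4)
  by auto

lemma coproductI:
  assumes "P \<in> obj C" "\<forall>s\<in>I. Xs s \<in> obj C \<and> j s \<in> hom C (Xs s) P"
   "\<And>Y g. Y \<in> obj C \<Longrightarrow> \<forall>s\<in>I. g s \<in> hom C (Xs s) Y \<Longrightarrow> \<exists>h. h \<in> hom C P Y \<and> (\<forall>s\<in>I. cmp C h (j s) = g s)"
   "\<And>Y h1 h2. h1 \<in> hom C P Y \<Longrightarrow> h2 \<in> hom C P Y \<Longrightarrow> \<forall>s\<in>I. cmp C h1 (j s) = cmp C h2 (j s) \<Longrightarrow> h1 = h2"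
  shows "coproduct C Xs I P j"
  unfolding coproduct_def
proof (intro conjI ballI allI impI)
  fix Y g assume Y: "Y \<in> obj C" "\<forall>s\<in>I. g s \<in> hom C (Xs s) Y"
  from assms(3)[OF Y] obtain h where h: "h \<in> hom C P Y" "\<forall>s\<in>I. cmp C h (j s) = g s" by blast
  show "\<exists>!h. h \<in> hom C P Y \<and> (\<forall>s\<in>I. cmp C h (j s) = g s)"
  proof (rule ex1I[where a=h])
    show "h \<in> hom C P Y \<and> (\<forall>s\<in>I. cmp C h (j s) = g s)" using h by blast
    fix h' assume "h' \<in> hom C P Y \<and> (\<forall>s\<in>I. cmp C h' (j s) = g s)"
    thus "h' = h" using assms(4)[of h' Y h] h by auto
  qed
qed (use assms(1,2) in auto)

lemma cop_cong: assumes "coproduct C Xs I P j" "\<forall>s\<in>I. j' s = j s" "\<forall>s\<in>I. Xs' s = Xs s"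
  shows "coproduct C Xs' I P j'"
proof (rule coproductI)
  show "P \<in> obj C" using cop_obj assms by auto
  show "\<forall>s\<in>I. Xs' s \<in> obj C \<and> j' s \<in> hom C (Xs' s) P" using assms unfolding coproduct_def by auto
  fix Y g assume "Y \<in> obj C" "\<forall>s\<in>I. g s \<in> hom C (Xs' s) Y"
  thus "\<exists>h. h \<in> hom C P Y \<and> (\<forall>s\<in>I. cmp C h (j' s) = g s)"
    using cind[OF assms(1), of Y g] assms by auto
next
  fix Y h1 h2 assume "h1 \<in> hom C P Y" "h2 \<in> hom C P Y" "\<forall>s\<in>I. cmp C h1 (j' s) = cmp C h2 (j' s)"
  thus "h1 = h2" using cop_ext[OF assms(1)] assms by auto
qed

lemma cop_empty: "initial C P \<Longrightarrow> coproduct C Xs {} P j"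
  unfolding initial_def coproduct_def by auto

lemma cop_empty_initial: "coproduct C Xs {} P j \<Longrightarrow> initial C P"
  unfolding initial_def coproduct_def by auto

lemma cop_single: assumes "X \<in> obj C" shows "coproduct C (\<lambda>_. X) {s} X (\<lambda>_. idt C X)"
proof (rule coproductI)
  fix Y g assume "\<forall>t\<in>{s}. g t \<in> hom C X Y"
  thus "\<exists>h. h \<in> hom C X Y \<and> (\<forall>t\<in>{s}. cmp C h (idt C X) = g t)" using id_right by auto
next
  fix Y h1 h2 assume "h1 \<in> hom C X Y" "h2 \<in> hom C X Y" "\<forall>t\<in>{s}. cmp C h1 (idt C X) = cmp C h2 (idt C X)"
  thus "h1 = h2" using id_right by auto
qed (use assms in auto)

lemma cop_iso: assumes "coproduct C Xs I P j" "iso C \<phi>" "\<phi> \<in> hom C P P'"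
  shows "coproduct C Xs I P' (\<lambda>s. cmp C \<phi> (j s))"
proof -
  from isoE[OF assms(2,3)] obtain \<psi> where \<psi>: "\<psi> \<in> hom C P' P" "cmp C \<psi> \<phi> = idt C P" "cmp C \<phi> \<psi> = idt C P'" .
  show ?thesis
  proof (rule coproductI)
    show "P' \<in> obj C" using assms hom_obj by auto
    show "\<forall>s\<in>I. Xs s \<in> obj C \<and> cmp C \<phi> (j s) \<in> hom C (Xs s) P'" using assms unfolding coproduct_def by auto
  next
    fix Y g assume Y: "Y \<in> obj C" "\<forall>s\<in>I. g s \<in> hom C (Xs s) Y"
    let ?h = "cind C P j I Y g"
    have "cmp C ?h \<psi> \<in> hom C P' Y" using cind[OF assms(1) Y] \<psi> by auto
    moreover have "\<forall>s\<in>I. cmp C (cmp C ?h \<psi>) (cmp C \<phi> (j s)) = g s"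
    proof
      fix s assume s: "s \<in> I"
      have js: "j s \<in> hom C (Xs s) P" using cop_inj[OF assms(1) s] .
      have hh: "?h \<in> hom C P Y" using cind[OF assms(1) Y] by auto
      have "cmp C (cmp C ?h \<psi>) (cmp C \<phi> (j s)) = cmp C ?h (cmp C \<psi> (cmp C \<phi> (j s)))"
        using assoc[OF comp_hom[OF js assms(3)] \<psi>(1) hh] by simp
      also have "cmp C \<psi> (cmp C \<phi> (j s)) = cmp C (cmp C \<psi> \<phi>) (j s)" using assoc[OF js assms(3) \<psi>(1)] .
      finally have "cmp C (cmp C ?h \<psi>) (cmp C \<phi> (j s)) = cmp C ?h (cmp C (cmp C \<psi> \<phi>) (j s))" .
      thus "cmp C (cmp C ?h \<psi>) (cmp C \<phi> (j s)) = g s" using \<psi> cind[OF assms(1) Y] s cop_inj[OF assms(1) s]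
        by (simp add: id_left)
    qed
    ultimately show "\<exists>h. h \<in> hom C P' Y \<and> (\<forall>s\<in>I. cmp C h (cmp C \<phi> (j s)) = g s)" by blast
  next
    fix Y h1 h2 assume h: "h1 \<in> hom C P' Y" "h2 \<in> hom C P' Y" "\<forall>s\<in>I. cmp C h1 (cmp C \<phi> (j s)) = cmp C h2 (cmp C \<phi> (j s))"
    have "cmp C h1 \<phi> = cmp C h2 \<phi>"
      apply (rule cop_ext[OF assms(1)])
      using h assms(3) apply auto[2]
      using h(3) assoc[OF cop_inj[OF assms(1)] assms(3) h(1)] assoc[OF cop_inj[OF assms(1)] assms(3) h(2)] by auto
    thus "h1 = h2" using iso_cancel_right[OF assms(2,3) h(1,2)] by simp
  qed
qed

lemma cop_compare_iso: assumes "coproduct C Xs I P j" "coproduct C Xs I P' j'"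
  shows "iso C (cind C P j I P' j')" "cind C P j I P' j' \<in> hom C P P'"
    "\<forall>s\<in>I. cmp C (cind C P j I P' j') (j s) = j' s"
proof -
  let ?h = "cind C P j I P' j'" and ?k = "cind C P' j' I P j"
  have h: "?h \<in> hom C P P'" "\<forall>s\<in>I. cmp C ?h (j s) = j' s"
    using cind[OF assms(1) cop_obj[OF assms(2)], of j'] cop_inj[OF assms(2)] by auto
  have k: "?k \<in> hom C P' P" "\<forall>s\<in>I. cmp C ?k (j' s) = j s"
    using cind[OF assms(2) cop_obj[OF assms(1)], of j] cop_inj[OF assms(1)] by auto
  have 1: "cmp C ?k ?h = idt C P"
  proof (rule cop_ext[OF assms(1)])
    show "cmp C ?k ?h \<in> hom C P P" using h k by auto
    show "idt C P \<in> hom C P P" using cop_obj[OF assms(1)] by auto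
    show "\<forall>s\<in>I. cmp C (cmp C ?k ?h) (j s) = cmp C (idt C P) (j s)"
    proof
      fix s assume s: "s \<in> I"
      have "cmp C (cmp C ?k ?h) (j s) = cmp C ?k (cmp C ?h (j s))"
        using assoc[OF cop_inj[OF assms(1) s] h(1) k(1)] by simp
      thus "cmp C (cmp C ?k ?h) (j s) = cmp C (idt C P) (j s)"
        using h k s id_left[OF cop_inj[OF assms(1) s]] by simp
    qed
  qed
  have 2: "cmp C ?h ?k = idt C P'"
  proof (rule cop_ext[OF assms(2)])
    show "cmp C ?h ?k \<in> hom C P' P'" using h k by auto
    show "idt C P' \<in> hom C P' P'" using cop_obj[OF assms(2)] by auto
    show "\<forall>s\<in>I. cmp C (cmp C ?h ?k) (j' s) = cmp C (idt C P') (j' s)"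
    proof
      fix s assume s: "s \<in> I"
      have "cmp C (cmp C ?h ?k) (j' s) = cmp C ?h (cmp C ?k (j' s))"
        using assoc[OF cop_inj[OF assms(2) s] k(1) h(1)] by simp
      thus "cmp C (cmp C ?h ?k) (j' s) = cmp C (idt C P') (j' s)"
        using h k s id_left[OF cop_inj[OF assms(2) s]] by simp
    qed
  qed
  show "iso C ?h" by (rule isoI[OF h(1) k(1) 1 2])
  show "?h \<in> hom C P P'" "\<forall>s\<in>I. cmp C ?h (j s) = j' s" using h by auto
qed

lemma cop_reindex: assumes "coproduct C (\<lambda>_. X) S P a" "bij_betw f S T"
  shows "coproduct C (\<lambda>_. X) T P (\<lambda>t. a (inv_into S f t))"
proof (rule coproductI)
  have inv: "\<forall>t\<in>T. inv_into S f t \<in> S" using assms(2)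
    by (metis bij_betw_def inv_into_into)
  show "P \<in> obj C" using cop_obj assms by auto
  show "\<forall>s\<in>T. X \<in> obj C \<and> a (inv_into S f s) \<in> hom C X P"
    using inv assms(1) unfolding coproduct_def by auto
next
  fix Y g assume Y: "Y \<in> obj C" "\<forall>s\<in>T. g s \<in> hom C X Y"
  have "\<forall>s\<in>S. g (f s) \<in> hom C X Y" using Y assms(2) bij_betwE by blast
  from cind[OF assms(1) Y(1) this] assms(2)
  show "\<exists>h. h \<in> hom C P Y \<and> (\<forall>s\<in>T. cmp C h (a (inv_into S f s)) = g s)"
    by (metis bij_betw_imp_surj_on bij_betw_inv_into_right inv_into_into)
next
  fix Y h1 h2 assume h: "h1 \<in> hom C P Y" "h2 \<in> hom C P Y" "\<forall>s\<in>T. cmp C h1 (a (inv_into S f s)) = cmp C h2 (a (inv_into S f s))"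
  have "\<forall>s\<in>S. cmp C h1 (a s) = cmp C h2 (a s)"
  proof
    fix s assume "s \<in> S"
    then have "f s \<in> T" "inv_into S f (f s) = s" using assms(2) 
      by (auto simp: bij_betw_def)
    thus "cmp C h1 (a s) = cmp C h2 (a s)" using h(3) by metis
  qed
  thus "h1 = h2" using cop_ext[OF assms(1) h(1,2)] by auto
qed

lemma bcop_unique: assumes "bcop C A B P p q" "h1 \<in> hom C P Q" "h2 \<in> hom C P Q"
  "cmp C h1 p = cmp C h2 p" "cmp C h1 q = cmp C h2 q" shows "h1 = h2"
proof -
  have Q: "Q \<in> obj C" using assms hom_obj by auto
  have "cmp C h2 p \<in> hom C A Q" "cmp C h2 q \<in> hom C B Q" using assms unfolding bcop_def by auto
  then have "\<exists>!h. h \<in> hom C P Q \<and> cmp C h p = cmp C h2 p \<and> cmp C h q = cmp C h2 q"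
    using assms Q unfolding bcop_def by blast
  thus ?thesis using assms by blast
qed

lemma cop_union: assumes "coproduct C Xs S PS a" "coproduct C Xs R PR b" "S \<inter> R = {}"
  "bcop C PS PR P p q"
  shows "coproduct C Xs (S \<union> R) P (\<lambda>t. if t \<in> S then cmp C p (a t) else cmp C q (b t))"
proof -
  have pq: "P \<in> obj C" "p \<in> hom C PS P" "q \<in> hom C PR P" using assms(4) unfolding bcop_def by auto
  show ?thesis
  proof (rule coproductI)
    show "P \<in> obj C" using pq by auto
    show "\<forall>s\<in>S \<union> R. Xs s \<in> obj C \<and> (if s \<in> S then cmp C p (a s) else cmp C q (b s)) \<in> hom C (Xs s) P"
      using assms(1,2) pq unfolding coproduct_def by auto
  next
    fix Y g assume Y: "Y \<in> obj C" "\<forall>s\<in>S \<union> R. g s \<in> hom C (Xs s) Y"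
    note c1 = cind[OF assms(1) Y(1), of g] and c2 = cind[OF assms(2) Y(1), of g]
    have "\<exists>!h. h \<in> hom C P Y \<and> cmp C h p = cind C PS a S Y g \<and> cmp C h q = cind C PR b R Y g"
      using assms(4) Y c1 c2 unfolding bcop_def by auto
    then obtain h where h: "h \<in> hom C P Y" "cmp C h p = cind C PS a S Y g" "cmp C h q = cind C PR b R Y g" by blast
    have "\<forall>s\<in>S \<union> R. cmp C h (if s \<in> S then cmp C p (a s) else cmp C q (b s)) = g s"
    proof
      fix s assume s: "s \<in> S \<union> R"
      show "cmp C h (if s \<in> S then cmp C p (a s) else cmp C q (b s)) = g s"
      proof (cases "s \<in> S")
        case True
        then show ?thesis using h c1 Y assoc[OF cop_inj[OF assms(1) True] pq(2) h(1)] by simp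
      next
        case False
        then have "s \<in> R" using s by auto
        then show ?thesis using False h c2 Y assoc[OF cop_inj[OF assms(2)] pq(3) h(1)] by simp
      qed
    qed
    with h show "\<exists>h. h \<in> hom C P Y \<and> (\<forall>s\<in>S \<union> R. cmp C h (if s \<in> S then cmp C p (a s) else cmp C q (b s)) = g s)"
      by blast
  next
    fix Y h1 h2 assume h: "h1 \<in> hom C P Y" "h2 \<in> hom C P Y"
      "\<forall>s\<in>S \<union> R. cmp C h1 (if s \<in> S then cmp C p (a s) else cmp C q (b s)) = cmp C h2 (if s \<in> S then cmp C p (a s) else cmp C q (b s))"
    have 1: "cmp C h1 p = cmp C h2 p"
      apply (rule cop_ext[OF assms(1)])
      using h pq apply auto[2]
    proof
      fix s assume s: "s \<in> S"
      then have "cmp C h1 (cmp C p (a s)) = cmp C h2 (cmp C p (a s))" using h(3) by (metis UnI1)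
      thus "cmp C (cmp C h1 p) (a s) = cmp C (cmp C h2 p) (a s)"
        using assoc[OF cop_inj[OF assms(1) s] pq(2) h(1)] assoc[OF cop_inj[OF assms(1) s] pq(2) h(2)] by simp
    qed
    have 2: "cmp C h1 q = cmp C h2 q"
      apply (rule cop_ext[OF assms(2)])
      using h pq apply auto[2]
    proof
      fix s assume s: "s \<in> R"
      then have "s \<notin> S" using assms(3) by auto
      then have "cmp C h1 (cmp C q (b s)) = cmp C h2 (cmp C q (b s))" using h(3) s by (metis UnI2)
      thus "cmp C (cmp C h1 q) (b s) = cmp C (cmp C h2 q) (b s)"
        using assoc[OF cop_inj[OF assms(2) s] pq(3) h(1)] assoc[OF cop_inj[OF assms(2) s] pq(3) h(2)] by simp
    qed
    show "h1 = h2" using bcop_unique[OF assms(4) h(1,2) 1 2] .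
  qed
qed

lemma pushout_initial_bcop: assumes "pushout C i f j k" "initial C (dom C i)"
  shows "bcop C (cod C i) (cod C f) (cod C j) j k"
proof -
  have ar: "i \<in> arr C" "f \<in> arr C" "j \<in> arr C" "k \<in> arr C" and eq: "dom C i = dom C f" "dom C j = cod C i"
    "dom C k = cod C f" "cod C j = cod C k" using assms unfolding pushout_def by auto
  have P: "cod C j \<in> obj C" using cat ar unfolding category_def by auto
  show ?thesis unfolding bcop_def
  proof (intro conjI ballI)
    show "cod C j \<in> obj C" by fact
    show "j \<in> hom C (cod C i) (cod C j)" "k \<in> hom C (cod C f) (cod C j)" using ar eq by (auto simp: hom_def)
    fix Q u v assume Q: "Q \<in> obj C" "u \<in> hom C (cod C i) Q" "v \<in> hom C (cod C f) Q"
    have "cmp C u i \<in> hom C (dom C i) Q" "cmp C v f \<in> hom C (dom C i) Q"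
      using comp_hom[OF arr_hom[OF ar(1)] Q(2)] comp_hom[OF arr_hom[OF ar(2)] Q(3)] eq by auto
    then have "cmp C u i = cmp C v f" using assms(2) Q unfolding initial_def by blast
    moreover have "\<forall>Q\<in>obj C. \<forall>u\<in>hom C (cod C i) Q. \<forall>v\<in>hom C (cod C f) Q.
        cmp C u i = cmp C v f \<longrightarrow>
        (\<exists>!h. h \<in> hom C (cod C j) Q \<and> cmp C h j = u \<and> cmp C h k = v)"
      using assms(1) unfolding pushout_def by (elim conjE)
    ultimately show "\<exists>!h. h \<in> hom C (cod C j) Q \<and> cmp C h j = u \<and> cmp C h k = v"
      using Q by blast
  qed
qed

end

lemma functor_hom: "is_functor C D F \<Longrightarrow> f \<in> hom C X Y \<Longrightarrow> farr F f \<in> hom D (fobj F X) (fobj F Y)"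
  unfolding is_functor_def hom_def by auto

lemma functor_comp: "is_functor C D F \<Longrightarrow> f \<in> hom C X Y \<Longrightarrow> g \<in> hom C Y Z \<Longrightarrow>
   farr F (cmp C g f) = cmp D (farr F g) (farr F f)"
  unfolding is_functor_def hom_def by auto

lemma functor_id: "is_functor C D F \<Longrightarrow> X \<in> obj C \<Longrightarrow> farr F (idt C X) = idt D (fobj F X)"
  unfolding is_functor_def by auto

lemma functor_iso: assumes "is_functor C D F" "iso C f" "category C" shows "iso D (farr F f)"
proof -
  obtain g where g: "f \<in> arr C" "g \<in> hom C (cod C f) (dom C f)" "cmp C g f = idt C (dom C f)" "cmp C f g = idt C (cod C f)"
    using assms unfolding iso_def by auto
  have f: "f \<in> hom C (dom C f) (cod C f)" using g by (simp add: hom_def)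
  have o: "dom C f \<in> obj C" "cod C f \<in> obj C" using cat.hom_obj[OF _ f] assms(3) unfolding cat_def by auto
  show ?thesis unfolding iso_def
  proof (intro conjI bexI)
    show "farr F f \<in> arr D" using functor_hom[OF assms(1) f] by (simp add: hom_def)
    show "farr F g \<in> hom D (cod D (farr F f)) (dom D (farr F f))"
      using functor_hom[OF assms(1) f] functor_hom[OF assms(1) g(2)] by (simp add: hom_def)
    show "cmp D (farr F g) (farr F f) = idt D (dom D (farr F f))"
      using functor_comp[OF assms(1) f g(2)] g functor_id[OF assms(1)] o functor_hom[OF assms(1) f]
      by (simp add: hom_def)
    show "cmp D (farr F f) (farr F g) = idt D (cod D (farr F f))"
      using functor_comp[OF assms(1) g(2) f] g functor_id[OF assms(1)] o functor_hom[OF assms(1) f]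
      by (simp add: hom_def)
  qed
qed


context cat begin

lemma po_homs: assumes "pushout C i f j k"
  shows "i \<in> hom C (dom C i) (cod C i)" "f \<in> hom C (dom C i) (cod C f)"
    "j \<in> hom C (cod C i) (cod C j)" "k \<in> hom C (cod C f) (cod C j)" "cmp C j i = cmp C k f"
  using assms unfolding pushout_def hom_def by auto

lemma po_univ: assumes "pushout C i f j k" "Q \<in> obj C" "u \<in> hom C (cod C i) Q" "v \<in> hom C (cod C f) Q"
  "cmp C u i = cmp C v f"
  shows "\<exists>!h. h \<in> hom C (cod C j) Q \<and> cmp C h j = u \<and> cmp C h k = v"
proof -
  have "\<forall>Q\<in>obj C. \<forall>u\<in>hom C (cod C i) Q. \<forall>v\<in>hom C (cod C f) Q.
        cmp C u i = cmp C v f \<longrightarrow>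
        (\<exists>!h. h \<in> hom C (cod C j) Q \<and> cmp C h j = u \<and> cmp C h k = v)"
    using assms(1) unfolding pushout_def by (elim conjE)
  thus ?thesis using assms(2-5) by blast
qed

lemma po_unique: assumes "pushout C i f j k" "h1 \<in> hom C (cod C j) Q" "h2 \<in> hom C (cod C j) Q"
  "cmp C h1 j = cmp C h2 j" "cmp C h1 k = cmp C h2 k" shows "h1 = h2"
proof -
  note H = po_homs[OF assms(1)]
  have Q: "Q \<in> obj C" using hom_obj assms(2) by auto
  have "cmp C (cmp C h2 j) i = cmp C (cmp C h2 k) f"
    using assoc[OF H(1) H(3) assms(3)] assoc[OF H(2) H(4) assms(3)] H(5) by simp
  from po_univ[OF assms(1) Q comp_hom[OF H(3) assms(3)] comp_hom[OF H(4) assms(3)] this]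
  show ?thesis using assms by blast
qed

lemma cube_iso:
  assumes po: "pushout C i f j k" and po': "pushout C i' f' j' k'"
    and a: "a \<in> hom C (dom C i) (dom C i')" "iso C a"
    and b: "b \<in> hom C (cod C i) (cod C i')" "iso C b"
    and c: "c \<in> hom C (cod C f) (cod C f')" "iso C c"
    and bi: "cmp C b i = cmp C i' a" and cf: "cmp C c f = cmp C f' a"
    and u: "u \<in> hom C (cod C j) (cod C j')" "cmp C u j = cmp C j' b" "cmp C u k = cmp C k' c"
  shows "iso C u"
proof -
  note H = po_homs[OF po] and H' = po_homs[OF po']
  from isoE[OF a(2) a(1)] obtain a' where a': "a' \<in> hom C (dom C i') (dom C i)" "cmp C a' a = idt C (dom C i)" "cmp C a a' = idt C (dom C i')" .
  from isoE[OF b(2) b(1)] obtain b' where b': "b' \<in> hom C (cod C i') (cod C i)" "cmp C b' b = idt C (cod C i)" "cmp C b b' = idt C (cod C i')" .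
  from isoE[OF c(2) c(1)] obtain c' where c': "c' \<in> hom C (cod C f') (cod C f)" "cmp C c' c = idt C (cod C f)" "cmp C c c' = idt C (cod C f')" .
  have ia: "cmp C i a' = cmp C b' i'"
  proof -
    have "cmp C i a' = cmp C (cmp C b' b) (cmp C i a')" using b' id_left[OF comp_hom[OF a'(1) H(1)]] by simp
    also have "\<dots> = cmp C b' (cmp C b (cmp C i a'))" using assoc[OF comp_hom[OF a'(1) H(1)] b(1) b'(1)] by simp
    also have "cmp C b (cmp C i a') = cmp C (cmp C b i) a'" using assoc[OF a'(1) H(1) b(1)] .
    also have "\<dots> = cmp C i' (cmp C a a')" using bi assoc[OF a'(1) a(1) H'(1)] by simp
    also have "\<dots> = i'" using a' id_right[OF H'(1)] by simp
    finally show ?thesis .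
  qed
  have fa: "cmp C f a' = cmp C c' f'"
  proof -
    have "cmp C f a' = cmp C (cmp C c' c) (cmp C f a')" using c' id_left[OF comp_hom[OF a'(1) H(2)]] by simp
    also have "\<dots> = cmp C c' (cmp C c (cmp C f a'))" using assoc[OF comp_hom[OF a'(1) H(2)] c(1) c'(1)] by simp
    also have "cmp C c (cmp C f a') = cmp C (cmp C c f) a'" using assoc[OF a'(1) H(2) c(1)] .
    also have "\<dots> = cmp C f' (cmp C a a')" using cf assoc[OF a'(1) a(1) H'(2)] by simp
    also have "\<dots> = f'" using a' id_right[OF H'(2)] by simp
    finally show ?thesis .
  qed
  have P: "cod C j \<in> obj C" using hom_obj[OF H(3)] by simp
  have P': "cod C j' \<in> obj C" using hom_obj[OF H'(3)] by simp
  have jb: "cmp C j b' \<in> hom C (cod C i') (cod C j)" using comp_hom[OF b'(1) H(3)] .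
  have kc: "cmp C k c' \<in> hom C (cod C f') (cod C j)" using comp_hom[OF c'(1) H(4)] .
  have eq: "cmp C (cmp C j b') i' = cmp C (cmp C k c') f'"
  proof -
    have "cmp C (cmp C j b') i' = cmp C j (cmp C b' i')" using assoc[OF H'(1) b'(1) H(3)] by simp
    also have "\<dots> = cmp C j (cmp C i a')" using ia by simp
    also have "\<dots> = cmp C (cmp C j i) a'" using assoc[OF a'(1) H(1) H(3)] .
    also have "\<dots> = cmp C (cmp C k f) a'" using H(5) by simp
    also have "\<dots> = cmp C k (cmp C f a')" using assoc[OF a'(1) H(2) H(4)] by simp
    also have "\<dots> = cmp C k (cmp C c' f')" using fa by simp
    also have "\<dots> = cmp C (cmp C k c') f'" using assoc[OF H'(2) c'(1) H(4)] .
    finally show ?thesis .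
  qed
  from po_univ[OF po' P jb kc eq] obtain v where v: "v \<in> hom C (cod C j') (cod C j)"
    "cmp C v j' = cmp C j b'" "cmp C v k' = cmp C k c'" by blast
  have vu: "cmp C v u = idt C (cod C j)"
  proof (rule po_unique[OF po])
    show "cmp C v u \<in> hom C (cod C j) (cod C j)" using comp_hom[OF u(1) v(1)] .
    show "idt C (cod C j) \<in> hom C (cod C j) (cod C j)" using P by auto
    have "cmp C (cmp C v u) j = cmp C v (cmp C u j)" using assoc[OF H(3) u(1) v(1)] by simp
    also have "\<dots> = cmp C v (cmp C j' b)" using u by simp
    also have "\<dots> = cmp C (cmp C v j') b" using assoc[OF b(1) H'(3) v(1)] .
    also have "\<dots> = cmp C j (cmp C b' b)" using v assoc[OF b(1) b'(1) H(3)] by simp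
    also have "\<dots> = j" using b' id_right[OF H(3)] by simp
    finally show "cmp C (cmp C v u) j = cmp C (idt C (cod C j)) j" using id_left[OF H(3)] by simp
    have "cmp C (cmp C v u) k = cmp C v (cmp C u k)" using assoc[OF H(4) u(1) v(1)] by simp
    also have "\<dots> = cmp C v (cmp C k' c)" using u by simp
    also have "\<dots> = cmp C (cmp C v k') c" using assoc[OF c(1) H'(4) v(1)] .
    also have "\<dots> = cmp C k (cmp C c' c)" using v assoc[OF c(1) c'(1) H(4)] by simp
    also have "\<dots> = k" using c' id_right[OF H(4)] by simp
    finally show "cmp C (cmp C v u) k = cmp C (idt C (cod C j)) k" using id_left[OF H(4)] by simp
  qed
  have uv: "cmp C u v = idt C (cod C j')"
  proof (rule po_unique[OF po'])
    show "cmp C u v \<in> hom C (cod C j') (cod C j')" using comp_hom[OF v(1) u(1)] .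
    show "idt C (cod C j') \<in> hom C (cod C j') (cod C j')" using P' by auto
    have "cmp C (cmp C u v) j' = cmp C u (cmp C v j')" using assoc[OF H'(3) v(1) u(1)] by simp
    also have "\<dots> = cmp C u (cmp C j b')" using v by simp
    also have "\<dots> = cmp C (cmp C u j) b'" using assoc[OF b'(1) H(3) u(1)] .
    also have "\<dots> = cmp C j' (cmp C b b')" using u assoc[OF b'(1) b(1) H'(3)] by simp
    also have "\<dots> = j'" using b' id_right[OF H'(3)] by simp
    finally show "cmp C (cmp C u v) j' = cmp C (idt C (cod C j')) j'" using id_left[OF H'(3)] by simp
    have "cmp C (cmp C u v) k' = cmp C u (cmp C v k')" using assoc[OF H'(4) v(1) u(1)] by simp
    also have "\<dots> = cmp C u (cmp C k c')" using v by simp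
    also have "\<dots> = cmp C (cmp C u k) c'" using assoc[OF c'(1) H(4) u(1)] .
    also have "\<dots> = cmp C k' (cmp C c c')" using u assoc[OF c'(1) c(1) H'(4)] by simp
    also have "\<dots> = k'" using c' id_right[OF H'(4)] by simp
    finally show "cmp C (cmp C u v) k' = cmp C (idt C (cod C j')) k'" using id_left[OF H'(4)] by simp
  qed
  show ?thesis by (rule isoI[OF u(1) v(1) vu uv])
qed

end

lemma FS_obj[simp]: "obj FinSet = {S. finite S}" by (simp add: FinSet_def)
lemma FS_arr: "(S,T,f) \<in> arr FinSet \<longleftrightarrow> finite S \<and> finite T \<and> f \<in> S \<rightarrow>\<^sub>E T" by (simp add: FinSet_def)
lemma FS_dom[simp]: "dom FinSet (S,T,f) = S" by (simp add: FinSet_def)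
lemma FS_cod[simp]: "cod FinSet (S,T,f) = T" by (simp add: FinSet_def)
lemma FS_cmp[simp]: "cmp FinSet (T',U,g) (S,T,f) = (S,U,restrict (g \<circ> f) S)" by (simp add: FinSet_def)
lemma FS_idt[simp]: "idt FinSet S = (S,S,restrict id S)" by (simp add: FinSet_def)
lemma FS_cof: "(S,T,f) \<in> cof FinSet \<longleftrightarrow> finite S \<and> finite T \<and> f \<in> S \<rightarrow>\<^sub>E T \<and> inj_on f S" by (simp add: FinSet_def)
lemma FS_weq: "(S,T,f) \<in> weq FinSet \<longleftrightarrow> finite S \<and> finite T \<and> f \<in> S \<rightarrow>\<^sub>E T \<and> bij_betw f S T" by (simp add: FinSet_def)
lemma FS_hom: "(S',T',f) \<in> hom FinSet S T \<longleftrightarrow> S' = S \<and> T' = T \<and> finite S \<and> finite T \<and> f \<in> S \<rightarrow>\<^sub>E T"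
  by (auto simp: hom_def FS_arr)
lemma FS_arr_cases: "a \<in> arr FinSet \<Longrightarrow> \<exists>S T f. a = (S,T,f) \<and> finite S \<and> finite T \<and> f \<in> S \<rightarrow>\<^sub>E T"
  by (cases a) (auto simp: FS_arr)
lemma FS_cof_arr: "cof FinSet \<subseteq> arr FinSet" by (auto simp: FinSet_def)
lemma FS_weq_arr: "weq FinSet \<subseteq> arr FinSet" by (auto simp: FinSet_def)

lemma restrict_ext_PiE: "f \<in> S \<rightarrow>\<^sub>E T \<Longrightarrow> restrict f S = f"
  by (simp add: extensional_restrict)

lemma FS_category: "category FinSet"
  unfolding category_def
proof (intro conjI ballI impI)
  fix a assume "a \<in> arr FinSet"
  then obtain S T f where a: "a = (S,T,f)" "finite S" "finite T" "f \<in> S \<rightarrow>\<^sub>E T" using FS_arr_cases by blast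
  show "dom FinSet a \<in> obj FinSet" "cod FinSet a \<in> obj FinSet" using a by auto
  show "cmp FinSet a (idt FinSet (dom FinSet a)) = a" "cmp FinSet (idt FinSet (cod FinSet a)) a = a"
  proof -
    have e: "\<And>x. x \<notin> S \<Longrightarrow> f x = undefined" using PiE_arb[OF a(4)] by blast
    have 1: "restrict (f \<circ> restrict id S) S = f" proof (rule ext) fix x show "restrict (f \<circ> restrict id S) S x = f x" by (cases "x \<in> S") (simp_all add: e) qed
    have 2: "restrict (restrict id T \<circ> f) S = f" proof (rule ext) fix x show "restrict (restrict id T \<circ> f) S x = f x" using a(4) by (cases "x \<in> S") (auto simp: e) qed
    show "cmp FinSet a (idt FinSet (dom FinSet a)) = a" "cmp FinSet (idt FinSet (cod FinSet a)) a = a" using a 1 2 by simp_all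
  qed
next
  fix X assume "X \<in> obj FinSet" thus "idt FinSet X \<in> hom FinSet X X" by (auto simp: FS_hom)
next
  fix a b assume "a \<in> arr FinSet" "b \<in> arr FinSet" "cod FinSet a = dom FinSet b"
  then show "cmp FinSet b a \<in> hom FinSet (dom FinSet a) (cod FinSet b)"
    by (auto simp: FS_hom FS_arr PiE_iff dest!: FS_arr_cases)
next
  fix a b c assume "a \<in> arr FinSet" "b \<in> arr FinSet" "c \<in> arr FinSet" "cod FinSet a = dom FinSet b" "cod FinSet b = dom FinSet c"
  then show "cmp FinSet c (cmp FinSet b a) = cmp FinSet (cmp FinSet c b) a"
    by (auto dest!: FS_arr_cases intro!: ext simp: PiE_iff)
qed

interpretation FS: cat FinSet by (unfold_locales) (rule FS_category)

lemma FS_iso: "iso FinSet (S,T,f) \<longleftrightarrow> finite S \<and> finite T \<and> f \<in> S \<rightarrow>\<^sub>E T \<and> bij_betw f S T"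
proof
  assume "iso FinSet (S,T,f)"
  then obtain g where g: "finite S" "finite T" "f \<in> S \<rightarrow>\<^sub>E T" "g \<in> T \<rightarrow>\<^sub>E S" "restrict (g \<circ> f) S = restrict id S"
    "restrict (f \<circ> g) T = restrict id T"
    unfolding iso_def by (auto simp: FS_arr FS_hom)
  have 1: "\<And>x. x \<in> S \<Longrightarrow> g (f x) = x" using g(5) by (metis comp_apply id_apply restrict_apply')
  have 2: "\<And>y. y \<in> T \<Longrightarrow> f (g y) = y" using g(6) by (metis comp_apply id_apply restrict_apply')
  have "bij_betw f S T"
    by (rule bij_betwI[where g=g]) (use g 1 2 in auto)
  thus "finite S \<and> finite T \<and> f \<in> S \<rightarrow>\<^sub>E T \<and> bij_betw f S T" using g by auto
next
  assume a: "finite S \<and> finite T \<and> f \<in> S \<rightarrow>\<^sub>E T \<and> bij_betw f S T"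
  let ?g = "restrict (inv_into S f) T"
  have g: "?g \<in> T \<rightarrow>\<^sub>E S" using a by (auto simp: bij_betw_def inv_into_into)
  show "iso FinSet (S,T,f)" unfolding iso_def
  proof (intro conjI bexI)
    show "(S,T,f) \<in> arr FinSet" using a by (simp add: FS_arr)
    show "(T,S,?g) \<in> hom FinSet (cod FinSet (S,T,f)) (dom FinSet (S,T,f))" using a g by (simp add: FS_hom)
    show "cmp FinSet (T, S, ?g) (S, T, f) = idt FinSet (dom FinSet (S, T, f))"
      using a by (auto intro!: ext simp: bij_betw_def PiE_iff)
    show "cmp FinSet (S, T, f) (T, S, ?g) = idt FinSet (cod FinSet (S, T, f))"
      using a by (auto intro!: ext simp: bij_betw_def PiE_iff f_inv_into_f)
  qed
qed


lemma FSC: "cat FinSet" by unfold_locales (rule FS_category)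

lemma FS_weq_iso: "a \<in> weq FinSet \<longleftrightarrow> iso FinSet a"
  by (cases a) (simp add: FS_weq FS_iso)

lemma FS_iso_cof: "iso FinSet a \<Longrightarrow> a \<in> cof FinSet"
  by (cases a) (auto simp: FS_iso FS_cof bij_betw_def)

lemma PiE_empty_fun: "f \<in> {} \<rightarrow>\<^sub>E X \<longleftrightarrow> f = (\<lambda>_. undefined)"
  by (auto simp: PiE_def extensional_def)

lemma FS_initial_empty: "initial FinSet {}"
  unfolding initial_def
proof (intro conjI ballI)
  show "{} \<in> obj FinSet" by simp
  fix X assume X: "X \<in> obj FinSet"
  show "\<exists>!f. f \<in> hom FinSet {} X"
  proof (rule ex1I[where a="({}, X, \<lambda>_. undefined)"])
    show "({}, X, \<lambda>_. undefined) \<in> hom FinSet {} X" using X by (simp add: FS_hom PiE_empty_fun)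
    fix f assume "f \<in> hom FinSet {} X" thus "f = ({}, X, \<lambda>_. undefined)"
      by (cases f) (simp add: FS_hom PiE_empty_fun)
  qed
qed

lemma FS_initial_iff: "initial FinSet I \<longleftrightarrow> I = {}"
proof
  assume "initial FinSet I"
  then have "\<exists>!f. f \<in> hom FinSet I {}" unfolding initial_def by simp
  then obtain f where "f \<in> hom FinSet I {}" by blast
  then show "I = {}" by (cases f) (auto simp: FS_hom PiE_iff)
qed (simp add: FS_initial_empty)

definition fsP :: "nat set \<Rightarrow> nat set \<Rightarrow> nat set \<Rightarrow> (nat \<Rightarrow> nat) \<Rightarrow> nat set" where
  "fsP A B C i = (\<lambda>c. 2*c) ` C \<union> (\<lambda>b. 2*b+1) ` (B - i ` A)"
definition fsj :: "nat set \<Rightarrow> nat set \<Rightarrow> (nat \<Rightarrow> nat) \<Rightarrow> (nat \<Rightarrow> nat) \<Rightarrow> nat \<Rightarrow> nat" where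
  "fsj A B i f = restrict (\<lambda>b. if b \<in> i ` A then 2 * f (inv_into A i b) else 2*b+1) B"
definition fsk :: "nat set \<Rightarrow> nat \<Rightarrow> nat" where
  "fsk C = restrict (\<lambda>c. 2*c) C"

lemma fs_po:
  assumes fin: "finite A" "finite B" "finite C" and i: "i \<in> A \<rightarrow>\<^sub>E B" "inj_on i A" and f: "f \<in> A \<rightarrow>\<^sub>E C"
  shows "pushout FinSet (A,B,i) (A,C,f) (B, fsP A B C i, fsj A B i f) (C, fsP A B C i, fsk C)"
proof -
  let ?P = "fsP A B C i" and ?j = "fsj A B i f" and ?k = "fsk C"
  have finP: "finite ?P" using fin by (simp add: fsP_def)
  have jP: "?j \<in> B \<rightarrow>\<^sub>E ?P"
  proof
    fix b assume b: "b \<in> B"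
    show "?j b \<in> ?P"
    proof (cases "b \<in> i ` A")
      case True
      then have "inv_into A i b \<in> A" by (simp add: inv_into_into)
      then have "f (inv_into A i b) \<in> C" using f by auto
      then show ?thesis using True b by (simp add: fsj_def fsP_def)
    next
      case False
      then show ?thesis using b by (simp add: fsj_def fsP_def)
    qed
  next
    fix b assume "b \<notin> B" thus "?j b = undefined" by (simp add: fsj_def)
  qed
  have kP: "?k \<in> C \<rightarrow>\<^sub>E ?P" by (auto simp: fsk_def fsP_def)
  have jia: "\<And>a. a \<in> A \<Longrightarrow> ?j (i a) = 2 * f a"
  proof -
    fix a assume a: "a \<in> A"
    have "i a \<in> B" using i a by auto
    thus "?j (i a) = 2 * f a" using a i(2) by (simp add: fsj_def)
  qed
  have comm: "restrict (?j \<circ> i) A = restrict (?k \<circ> f) A"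
  proof (rule ext)
    fix a show "restrict (?j \<circ> i) A a = restrict (?k \<circ> f) A a"
      using jia f by (cases "a \<in> A") (auto simp: fsk_def)
  qed
  show ?thesis unfolding pushout_def
  proof (intro conjI ballI impI)
    show "(A, B, i) \<in> arr FinSet" "(A, C, f) \<in> arr FinSet" "(B, ?P, ?j) \<in> arr FinSet" "(C, ?P, ?k) \<in> arr FinSet"
      using fin i f finP jP kP by (auto simp: FS_arr)
    show "cmp FinSet (B, ?P, ?j) (A, B, i) = cmp FinSet (C, ?P, ?k) (A, C, f)" using comm by simp
  next
    fix Q u v assume Q: "Q \<in> obj FinSet" and u: "u \<in> hom FinSet (cod FinSet (A, B, i)) Q"
      and v: "v \<in> hom FinSet (cod FinSet (A, C, f)) Q"
      and uv: "cmp FinSet u (A, B, i) = cmp FinSet v (A, C, f)"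
    obtain u' where u': "u = (B,Q,u')" "u' \<in> B \<rightarrow>\<^sub>E Q" using u by (cases u) (auto simp: FS_hom)
    obtain v' where v': "v = (C,Q,v')" "v' \<in> C \<rightarrow>\<^sub>E Q" using v by (cases v) (auto simp: FS_hom)
    have uv': "\<And>a. a \<in> A \<Longrightarrow> u' (i a) = v' (f a)"
    proof -
      fix a assume a: "a \<in> A"
      have "restrict (u' \<circ> i) A a = restrict (v' \<circ> f) A a" using uv u' v' by simp
      thus "u' (i a) = v' (f a)" using a by simp
    qed
    let ?h = "restrict (\<lambda>p. if even p then v' (p div 2) else u' (p div 2)) ?P"
    show "\<exists>!h. h \<in> hom FinSet (cod FinSet (B, ?P, ?j)) Q \<and> cmp FinSet h (B, ?P, ?j) = u \<and> cmp FinSet h (C, ?P, ?k) = v"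
    proof (rule ex1I[where a="(?P, Q, ?h)"])
      have hQ: "?h \<in> ?P \<rightarrow>\<^sub>E Q"
      proof
        fix p assume "p \<in> ?P"
        then show "?h p \<in> Q" unfolding fsP_def using u' v' by auto
      qed simp
      have hj: "restrict (?h \<circ> ?j) B = u'"
      proof (rule ext)
        fix b show "restrict (?h \<circ> ?j) B b = u' b"
        proof (cases "b \<in> B")
          case True
          then have jb: "?j b \<in> ?P" using jP by auto
          show ?thesis
          proof (cases "b \<in> i ` A")
            case True
            then obtain a where a: "a \<in> A" "b = i a" by auto
            then show ?thesis using jia[OF a(1)] jb uv'[OF a(1)] \<open>b \<in> B\<close> by simp
          next
            case False
            then show ?thesis using jb \<open>b \<in> B\<close> by (simp add: fsj_def)
          qed
        next
          case False
          then show ?thesis using PiE_arb[OF u'(2) False] by simp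
        qed
      qed
      have hk: "restrict (?h \<circ> ?k) C = v'"
      proof (rule ext)
        fix c show "restrict (?h \<circ> ?k) C c = v' c"
          using v' PiE_arb[OF v'(2)] by (cases "c \<in> C") (auto simp: fsk_def fsP_def)
      qed
      show "(?P, Q, ?h) \<in> hom FinSet (cod FinSet (B, ?P, ?j)) Q \<and>
          cmp FinSet (?P, Q, ?h) (B, ?P, ?j) = u \<and> cmp FinSet (?P, Q, ?h) (C, ?P, ?k) = v"
        using hQ hj hk u' v' Q finP by (simp add: FS_hom)
    next
      fix h assume h: "h \<in> hom FinSet (cod FinSet (B, ?P, ?j)) Q \<and> cmp FinSet h (B, ?P, ?j) = u \<and> cmp FinSet h (C, ?P, ?k) = v"
      obtain h' where h': "h = (?P, Q, h')" "h' \<in> ?P \<rightarrow>\<^sub>E Q" using h by (cases h) (auto simp: FS_hom)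
      have e1: "restrict (h' \<circ> ?j) B = u'" and e2: "restrict (h' \<circ> ?k) C = v'" using h h' u' v' by auto
      have "h' = ?h"
      proof (rule ext)
        fix p show "h' p = ?h p"
        proof (cases "p \<in> ?P")
          case False
          then show ?thesis using PiE_arb[OF h'(2) False] by simp
        next
          case True
          then consider c where "c \<in> C" "p = 2*c" | b where "b \<in> B" "b \<notin> i ` A" "p = 2*b+1"
            unfolding fsP_def by auto
          then show ?thesis
          proof cases
            case 1
            have "restrict (h' \<circ> ?k) C c = v' c" using e2 by simp
            then show ?thesis using 1 True by (simp add: fsk_def)
          next
            case 2
            have "restrict (h' \<circ> ?j) B b = u' b" using e1 by simp
            then show ?thesis using 2 True by (simp add: fsj_def)
          qed
        qed
      qed
      then show "h = (?P, Q, ?h)" using h' by simp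
    qed
  qed simp_all
qed


lemma fs_po_char:
  assumes po: "pushout FinSet (A,B,i) (A,C,f) (B,P,j) (C,P,k)" and inj: "inj_on i A"
  shows "inj_on k C" "\<And>b c. b \<in> B \<Longrightarrow> c \<in> C \<Longrightarrow> j b = k c \<Longrightarrow> \<exists>a\<in>A. b = i a \<and> c = f a"
    "\<And>b b'. b \<in> B \<Longrightarrow> b' \<in> B \<Longrightarrow> j b = j b' \<Longrightarrow> b \<noteq> b' \<Longrightarrow> j b \<in> k ` C"
    "P = j ` B \<union> k ` C"
proof -
  have ar: "finite A" "finite B" "finite C" "finite P" "i \<in> A \<rightarrow>\<^sub>E B" "f \<in> A \<rightarrow>\<^sub>E C" "j \<in> B \<rightarrow>\<^sub>E P" "k \<in> C \<rightarrow>\<^sub>E P"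
    using po unfolding pushout_def by (auto simp: FS_arr)
  have comm: "restrict (j \<circ> i) A = restrict (k \<circ> f) A" using po unfolding pushout_def by simp
  have jika: "\<And>a. a \<in> A \<Longrightarrow> j (i a) = k (f a)"
  proof -
    fix a assume "a \<in> A"
    thus "j (i a) = k (f a)" using fun_cong[OF comm, of a] by simp
  qed
  let ?E = "fsP A B C i" and ?u = "fsj A B i f" and ?v = "fsk C"
  have E: "pushout FinSet (A,B,i) (A,C,f) (B, ?E, ?u) (C, ?E, ?v)" using fs_po[OF ar(1-3,5) inj ar(6)] .
  note EH = cat.po_homs[OF FSC E]
  have Eobj: "?E \<in> obj FinSet" using cat.hom_obj[OF FSC EH(3)] by simp
  have "\<exists>!h. h \<in> hom FinSet (cod FinSet (B,P,j)) ?E \<and> cmp FinSet h (B,P,j) = (B, ?E, ?u) \<and> cmp FinSet h (C,P,k) = (C, ?E, ?v)"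
    using cat.po_univ[OF FSC po Eobj] EH by simp
  then obtain h where h: "h \<in> hom FinSet P ?E" "cmp FinSet h (B,P,j) = (B, ?E, ?u)" "cmp FinSet h (C,P,k) = (C, ?E, ?v)"
    by auto
  obtain h' where h': "h = (P, ?E, h')" using h(1) by (cases h) (auto simp: FS_hom)
  have hj: "\<And>b. b \<in> B \<Longrightarrow> h' (j b) = ?u b"
  proof -
    fix b assume b: "b \<in> B"
    have eq: "restrict (h' \<circ> j) B = ?u" using h(2) h' by simp
    show "h' (j b) = ?u b" using fun_cong[OF eq, of b] b by simp
  qed
  have hk: "\<And>c. c \<in> C \<Longrightarrow> h' (k c) = 2 * c"
  proof -
    fix c assume c: "c \<in> C"
    have eq: "restrict (h' \<circ> k) C = ?v" using h(3) h' by simp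
    show "h' (k c) = 2 * c" using fun_cong[OF eq, of c] c by (simp add: fsk_def)
  qed
  have uin: "\<And>b. b \<in> B \<Longrightarrow> b \<in> i ` A \<Longrightarrow> ?u b = 2 * f (inv_into A i b)" by (simp add: fsj_def)
  have uout: "\<And>b. b \<in> B \<Longrightarrow> b \<notin> i ` A \<Longrightarrow> ?u b = 2 * b + 1" by (simp add: fsj_def)
  show "inj_on k C"
  proof (rule inj_onI)
    fix c c' assume "c \<in> C" "c' \<in> C" "k c = k c'"
    then have "2 * c = 2 * c'" using hk by metis
    thus "c = c'" by simp
  qed
  show "\<exists>a\<in>A. b = i a \<and> c = f a" if "b \<in> B" "c \<in> C" "j b = k c" for b c
  proof -
    have e: "?u b = 2 * c" using hj[OF that(1)] hk[OF that(2)] that(3) by simp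
    have bi: "b \<in> i ` A"
    proof (rule ccontr)
      assume "b \<notin> i ` A"
      then have "2 * b + 1 = 2 * c" using uout[OF that(1)] e by simp
      thus False by presburger
    qed
    then obtain a where a: "a \<in> A" "b = i a" by auto
    have "inv_into A i b = a" using a inj by simp
    then have "2 * f a = 2 * c" using uin[OF that(1) bi] e by simp
    thus ?thesis using a by auto
  qed
  show "j b \<in> k ` C" if "b \<in> B" "b' \<in> B" "j b = j b'" "b \<noteq> b'" for b b'
  proof (cases "b \<in> i ` A")
    case True
    then obtain a where a: "a \<in> A" "b = i a" by auto
    have "f a \<in> C" using ar(6) a by auto
    thus ?thesis using jika[OF a(1)] a by auto
  next
    case False
    have e: "?u b = ?u b'" using hj that by metis
    show ?thesis
    proof (cases "b' \<in> i ` A")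
      case True
      then have "2 * b + 1 = 2 * f (inv_into A i b')" using e uin[OF that(2)] uout[OF that(1) False] by simp
      then have False by presburger
      then show ?thesis ..
    next
      case False2: False
      then have "2 * b + 1 = 2 * b' + 1" using e uout[OF that(2)] uout[OF that(1) False] by simp
      then show ?thesis using that(4) by simp
    qed
  qed
  show "P = j ` B \<union> k ` C"
  proof -
    let ?Q = "{0::nat, 1}"
    let ?h1 = "(P, ?Q, restrict (\<lambda>_. 0::nat) P)" and ?h2 = "(P, ?Q, restrict (\<lambda>p. if p \<in> j ` B \<union> k ` C then 0::nat else 1) P)"
    have "?h1 = ?h2"
    proof (rule cat.po_unique[OF FSC po])
      show "?h1 \<in> hom FinSet (cod FinSet (B, P, j)) ?Q" "?h2 \<in> hom FinSet (cod FinSet (B, P, j)) ?Q"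
        using ar by (auto simp: FS_hom)
      show "cmp FinSet ?h1 (B, P, j) = cmp FinSet ?h2 (B, P, j)"
        using ar(7) by (auto intro!: ext simp: PiE_iff)
      show "cmp FinSet ?h1 (C, P, k) = cmp FinSet ?h2 (C, P, k)"
        using ar(8) by (auto intro!: ext simp: PiE_iff)
    qed
    then have fe: "restrict (\<lambda>_. 0::nat) P = restrict (\<lambda>p. if p \<in> j ` B \<union> k ` C then 0::nat else 1) P" by simp
    have "\<forall>p\<in>P. p \<in> j ` B \<union> k ` C"
    proof
      fix p assume p: "p \<in> P"
      show "p \<in> j ` B \<union> k ` C" using fun_cong[OF fe, of p] p by (simp split: if_splits)
    qed
    moreover have "j ` B \<union> k ` C \<subseteq> P" using ar(7,8) by auto
    ultimately show ?thesis by blast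
  qed
qed


lemma bij_restrict_iff: "bij_betw (restrict g S) S T \<longleftrightarrow> bij_betw g S T"
  by (rule bij_betw_cong) simp

lemma inj_restrict_iff: "inj_on (restrict g S) S \<longleftrightarrow> inj_on g S"
  by (rule inj_on_cong) simp

lemma restrict_comp_PiE: "f \<in> S \<rightarrow>\<^sub>E T \<Longrightarrow> g \<in> T \<rightarrow>\<^sub>E U \<Longrightarrow> restrict (g \<circ> f) S \<in> S \<rightarrow>\<^sub>E U"
  by (auto simp: PiE_iff)

lemma FS_po_shape: assumes "pushout FinSet i f j k"
  shows "\<exists>A B C P i' f' j' k'. i = (A,B,i') \<and> f = (A,C,f') \<and> j = (B,P,j') \<and> k = (C,P,k')"
proof -
  obtain A B i' where i: "i = (A,B,i')" by (cases i)
  obtain A2 C f' where f: "f = (A2,C,f')" by (cases f)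
  obtain B2 P j' where j: "j = (B2,P,j')" by (cases j)
  obtain C2 P2 k' where k: "k = (C2,P2,k')" by (cases k)
  show ?thesis using assms unfolding pushout_def i f j k by auto
qed

lemma FS_cofcat: "cofibration_category FinSet"
  unfolding cofibration_category_def
proof (intro conjI ballI allI impI)
  show "category FinSet" by (rule FS_category)
  show "cof FinSet \<subseteq> arr FinSet" by (rule FS_cof_arr)
next
  fix f assume "iso FinSet f" thus "f \<in> cof FinSet" by (rule FS_iso_cof)
next
  fix f g assume fg: "f \<in> cof FinSet" "g \<in> cof FinSet" "cod FinSet f = dom FinSet g"
  obtain S T f' where f: "f = (S,T,f')" by (cases f)
  obtain T2 U g' where g: "g = (T2,U,g')" by (cases g)
  have "T2 = T" using fg f g by simp
  then have a: "finite S" "finite T" "finite U" "f' \<in> S \<rightarrow>\<^sub>E T" "g' \<in> T \<rightarrow>\<^sub>E U" "inj_on f' S" "inj_on g' T"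
    using fg f g by (auto simp: FS_cof)
  have "f' ` S \<subseteq> T" using a(4) by auto
  then have "inj_on (g' \<circ> f') S" using comp_inj_on[OF a(6) inj_on_subset[OF a(7)]] by simp
  then show "cmp FinSet g f \<in> cof FinSet" using a f g \<open>T2 = T\<close> restrict_comp_PiE[OF a(4,5)]
    by (simp add: FS_cof inj_restrict_iff)
next
  show "\<exists>I. initial FinSet I \<and> (\<forall>X\<in>obj FinSet. \<forall>f\<in>hom FinSet I X. f \<in> cof FinSet)"
  proof (intro exI conjI ballI)
    show "initial FinSet {}" by (rule FS_initial_empty)
    fix X f assume "X \<in> obj FinSet" "f \<in> hom FinSet {} X"
    thus "f \<in> cof FinSet" by (cases f) (auto simp: FS_hom FS_cof)
  qed
next
  fix i f assume i: "i \<in> cof FinSet" and f: "f \<in> arr FinSet" "dom FinSet f = dom FinSet i"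
  obtain A B i' where ii: "i = (A,B,i')" by (cases i)
  obtain A2 C f' where ff: "f = (A2,C,f')" by (cases f)
  have "A2 = A" using f ii ff by simp
  then have "pushout FinSet i f (B, fsP A B C i', fsj A B i' f') (C, fsP A B C i', fsk C)"
    using fs_po[of A B C i' f'] i f ii ff by (auto simp: FS_cof FS_arr)
  thus "\<exists>j k. pushout FinSet i f j k" by blast
next
  fix i f j k assume po: "pushout FinSet i f j k" and i: "i \<in> cof FinSet"
  from FS_po_shape[OF po] obtain A B C P i' f' j' k' where sh: "i = (A,B,i')" "f = (A,C,f')" "j = (B,P,j')" "k = (C,P,k')"
    by blast
  have "inj_on k' C" using fs_po_char(1)[of A B i' C f' P j' k'] po i sh by (simp add: FS_cof)
  moreover have "k \<in> arr FinSet" using po unfolding pushout_def by simp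
  ultimately show "k \<in> cof FinSet" using sh by (simp add: FS_cof FS_arr)
qed

lemma FS_weq_comp: assumes "f \<in> weq FinSet" "g \<in> weq FinSet" "cod FinSet f = dom FinSet g"
  shows "cmp FinSet g f \<in> weq FinSet"
proof -
  have fa: "f \<in> hom FinSet (dom FinSet f) (cod FinSet f)" "g \<in> hom FinSet (dom FinSet g) (cod FinSet g)"
    using assms FS_weq_arr by (auto simp: hom_def)
  show ?thesis using cat.iso_comp[OF FSC, of f "dom FinSet f" "cod FinSet f" g "cod FinSet g"] assms fa
    by (simp add: FS_weq_iso)
qed

lemma FS_2of6: assumes ar: "f \<in> arr FinSet" "g \<in> arr FinSet" "h \<in> arr FinSet"
  and c: "cod FinSet h = dom FinSet g" "cod FinSet g = dom FinSet f"
  and w: "cmp FinSet f g \<in> weq FinSet" "cmp FinSet g h \<in> weq FinSet"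
  shows "f \<in> weq FinSet \<and> g \<in> weq FinSet \<and> h \<in> weq FinSet \<and> cmp FinSet f (cmp FinSet g h) \<in> weq FinSet"
proof -
  obtain T0 T1 h' where hh: "h = (T0,T1,h')" by (cases h)
  obtain T1' T2 g' where gg: "g = (T1',T2,g')" by (cases g)
  obtain T2' T3 f' where ff: "f = (T2',T3,f')" by (cases f)
  have eqs: "T1' = T1" "T2' = T2" using c hh gg ff by auto
  note defs = hh gg ff eqs
  have fin: "finite T0" "finite T1" "finite T2" "finite T3" and pi: "h' \<in> T0 \<rightarrow>\<^sub>E T1" "g' \<in> T1 \<rightarrow>\<^sub>E T2" "f' \<in> T2 \<rightarrow>\<^sub>E T3"
    using ar defs by (auto simp: FS_arr)
  have fg: "bij_betw (f' \<circ> g') T1 T3" using w defs by (simp add: FS_weq bij_restrict_iff)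
  have gh: "bij_betw (g' \<circ> h') T0 T2" using w defs by (simp add: FS_weq bij_restrict_iff)
  have gsurj: "g' ` T1 = T2"
  proof
    show "g' ` T1 \<subseteq> T2" using pi by auto
    have "T2 = g' ` (h' ` T0)" using gh by (simp add: bij_betw_def image_comp)
    also have "\<dots> \<subseteq> g' ` T1" using pi by auto
    finally show "T2 \<subseteq> g' ` T1" .
  qed
  have ginj: "inj_on g' T1" using fg inj_on_imageI2 by (auto simp: bij_betw_def)
  have gb: "bij_betw g' T1 T2" using gsurj ginj by (simp add: bij_betw_def)
  have fb: "bij_betw f' T2 T3" using bij_betw_comp_iff[OF gb, of f' T3] fg by blast
  have hb: "bij_betw h' T0 T1" using bij_betw_comp_iff2[OF gb, of h' T0] pi gh by auto
  have fghb: "bij_betw (f' \<circ> (g' \<circ> h')) T0 T3" using bij_betw_trans[OF gh fb] by simp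
  have "bij_betw (restrict (f' \<circ> restrict (g' \<circ> h') T0) T0) T0 T3"
    using fghb by (simp add: bij_restrict_iff cong: bij_betw_cong)
  moreover have "restrict (f' \<circ> restrict (g' \<circ> h') T0) T0 \<in> T0 \<rightarrow>\<^sub>E T3"
    using restrict_comp_PiE[OF restrict_comp_PiE[OF pi(1) pi(2)] pi(3)] by simp
  ultimately show ?thesis using fin pi gb fb hb defs by (simp add: FS_weq)
qed

lemma FS_precyl: "pre_cylinder_category FinSet"
  unfolding pre_cylinder_category_def
proof (intro conjI allI impI ballI)
  show "cofibration_category FinSet" by (rule FS_cofcat)
  show "weq FinSet \<subseteq> arr FinSet" by (rule FS_weq_arr)
next
  fix f assume "iso FinSet f" thus "f \<in> weq FinSet" by (simp add: FS_weq_iso)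
next
  fix f g assume "f \<in> weq FinSet" "g \<in> weq FinSet" "cod FinSet f = dom FinSet g"
  thus "cmp FinSet g f \<in> weq FinSet" by (rule FS_weq_comp)
next
  fix f g h assume "f \<in> arr FinSet" "g \<in> arr FinSet" "h \<in> arr FinSet" "cod FinSet h = dom FinSet g"
    "cod FinSet g = dom FinSet f" "cmp FinSet f g \<in> weq FinSet" "cmp FinSet g h \<in> weq FinSet"
  from FS_2of6[OF this] show "f \<in> weq FinSet" "g \<in> weq FinSet" "h \<in> weq FinSet"
    "cmp FinSet f (cmp FinSet g h) \<in> weq FinSet" by auto
next
  fix i f j k i' f' j' k' a b c u
  assume as: "pushout FinSet i f j k" "pushout FinSet i' f' j' k'" "i \<in> cof FinSet" "i' \<in> cof FinSet"
    "a \<in> hom FinSet (dom FinSet i) (dom FinSet i')" "b \<in> hom FinSet (cod FinSet i) (cod FinSet i')"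
    "c \<in> hom FinSet (cod FinSet f) (cod FinSet f')" "a \<in> weq FinSet" "b \<in> weq FinSet" "c \<in> weq FinSet"
    "cmp FinSet b i = cmp FinSet i' a" "cmp FinSet c f = cmp FinSet f' a"
    "u \<in> hom FinSet (cod FinSet j) (cod FinSet j')" "cmp FinSet u j = cmp FinSet j' b" "cmp FinSet u k = cmp FinSet k' c"
  have "iso FinSet u"
    by (rule cat.cube_iso[OF FSC as(1,2) as(5) _ as(6) _ as(7) _ as(11,12,13,14,15)])
       (use as(8,9,10) in \<open>simp_all add: FS_weq_iso\<close>)
  thus "u \<in> weq FinSet" by (simp add: FS_weq_iso)
qed


locale pcc =
  fixes D :: "('o,'a) pccat"
  assumes pc: "pre_cylinder_category D"
begin

lemma cofcat: "cofibration_category D" using pc unfolding pre_cylinder_category_def by auto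

lemma catD: "category D" using cofcat unfolding cofibration_category_def by auto

sublocale cat D by unfold_locales (rule catD)

lemma iso_weq: "iso D f \<Longrightarrow> f \<in> weq D" using pc unfolding pre_cylinder_category_def by auto
lemma iso_cof: "iso D f \<Longrightarrow> f \<in> cof D" using cofcat unfolding cofibration_category_def by auto
lemma cof_comp: "f \<in> cof D \<Longrightarrow> g \<in> cof D \<Longrightarrow> cod D f = dom D g \<Longrightarrow> cmp D g f \<in> cof D"
  using cofcat unfolding cofibration_category_def by auto
lemma po_exists: "i \<in> cof D \<Longrightarrow> f \<in> arr D \<Longrightarrow> dom D f = dom D i \<Longrightarrow> \<exists>j k. pushout D i f j k"
  using cofcat unfolding cofibration_category_def by auto
lemma po_cof: "pushout D i f j k \<Longrightarrow> i \<in> cof D \<Longrightarrow> k \<in> cof D"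
  using cofcat unfolding cofibration_category_def by auto
lemma cof_arr: "f \<in> cof D \<Longrightarrow> f \<in> arr D"
  using cofcat unfolding cofibration_category_def by auto

definition I0 where "I0 = (SOME I. initial D I \<and> (\<forall>X\<in>obj D. \<forall>f\<in>hom D I X. f \<in> cof D))"

lemma I0: "initial D I0" "\<And>X f. X \<in> obj D \<Longrightarrow> f \<in> hom D I0 X \<Longrightarrow> f \<in> cof D"
proof -
  have "\<exists>I. initial D I \<and> (\<forall>X\<in>obj D. \<forall>f\<in>hom D I X. f \<in> cof D)"
    using cofcat unfolding cofibration_category_def by (elim conjE) assumption
  from someI_ex[OF this] have "initial D I0 \<and> (\<forall>X\<in>obj D. \<forall>f\<in>hom D I0 X. f \<in> cof D)"
    unfolding I0_def .
  thus "initial D I0" "\<And>X f. X \<in> obj D \<Longrightarrow> f \<in> hom D I0 X \<Longrightarrow> f \<in> cof D" by blast+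
qed

lemma initial_map: "X \<in> obj D \<Longrightarrow> \<exists>f. f \<in> hom D I0 X"
  using I0(1) unfolding initial_def by auto

lemma bcop_exists: assumes "A \<in> obj D" "B \<in> obj D"
  shows "\<exists>P p q. bcop D A B P p q \<and> q \<in> cof D"
proof -
  obtain i where i: "i \<in> hom D I0 A" using initial_map assms by blast
  obtain f where f: "f \<in> hom D I0 B" using initial_map assms by blast
  have ic: "i \<in> cof D" using I0(2) assms i by auto
  have "\<exists>j k. pushout D i f j k" using po_exists[OF ic] i f by (auto simp: hom_def)
  then obtain j k where po: "pushout D i f j k" by blast
  have "bcop D (cod D i) (cod D f) (cod D j) j k"
    by (rule pushout_initial_bcop[OF po]) (use i I0(1) in \<open>simp add: hom_def\<close>)
  moreover have "k \<in> cof D" using po_cof[OF po ic] .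
  ultimately show ?thesis using i f by (auto simp: hom_def)
qed

lemma cop_exists: assumes "finite S" "X \<in> obj D" shows "\<exists>P j. coproduct D (\<lambda>_. X) S P j"
  using assms(1)
proof (induction S rule: finite_induct)
  case empty
  show ?case using cop_empty[OF I0(1)] by blast
next
  case (insert s S)
  then obtain P j where Pj: "coproduct D (\<lambda>_. X) S P j" by blast
  obtain Q p q where b: "bcop D P X Q p q" using bcop_exists[OF cop_obj[OF Pj] assms(2)] by blast
  have "coproduct D (\<lambda>_. X) (S \<union> {s}) Q (\<lambda>t. if t \<in> S then cmp D p (j t) else cmp D q (idt D X))"
    by (rule cop_union[OF Pj cop_single[OF assms(2)] _ b]) (use insert in auto)
  thus ?case by auto
qed

end

definition copPJ :: "('o,'a,'z) cat_scheme \<Rightarrow> 'o \<Rightarrow> nat set \<Rightarrow> 'o \<times> (nat \<Rightarrow> 'a)" where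
  "copPJ D X S = (if S = star then (X, \<lambda>_. idt D X) else SOME (P,j). coproduct D (\<lambda>_. X) S P j)"
definition "copP D X S = fst (copPJ D X S)"
definition "copJ D X S = snd (copPJ D X S)"

context pcc begin

lemma cop_ok: assumes "X \<in> obj D" "finite S" shows "coproduct D (\<lambda>_. X) S (copP D X S) (copJ D X S)"
proof (cases "S = star")
  case True
  then show ?thesis using cop_single[OF assms(1), of 0] by (simp add: copP_def copJ_def copPJ_def star_def)
next
  case False
  have "\<exists>Pj. (\<lambda>(P,j). coproduct D (\<lambda>_. X) S P j) Pj" using cop_exists[OF assms(2,1)] by auto
  from someI_ex[OF this] show ?thesis using False
    by (simp add: copP_def copJ_def copPJ_def split: prod.splits)
qed

lemma copP_obj: "X \<in> obj D \<Longrightarrow> finite S \<Longrightarrow> copP D X S \<in> obj D" using cop_obj[OF cop_ok] .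
lemma copJ_hom: "X \<in> obj D \<Longrightarrow> finite S \<Longrightarrow> s \<in> S \<Longrightarrow> copJ D X S s \<in> hom D X (copP D X S)"
  using cop_inj[OF cop_ok] .

end


definition GFo :: "('o,'a,'z) cat_scheme \<Rightarrow> 'o \<Rightarrow> nat set \<Rightarrow> 'o" where
  "GFo D X = (\<lambda>S. if S \<in> obj FinSet then copP D X S else undefined)"
definition GFa :: "('o,'a,'z) cat_scheme \<Rightarrow> 'o \<Rightarrow> finarr \<Rightarrow> 'a" where
  "GFa D X = (\<lambda>a. if a \<in> arr FinSet then
      cind D (copP D X (dom FinSet a)) (copJ D X (dom FinSet a)) (dom FinSet a) (copP D X (cod FinSet a))
        (\<lambda>s. copJ D X (cod FinSet a) (snd (snd a) s)) else undefined)"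
definition "GF D X = (GFo D X, GFa D X)"

context pcc begin

lemma GFa_tuple: "(S,T,f) \<in> arr FinSet \<Longrightarrow>
  GFa D X (S,T,f) = cind D (copP D X S) (copJ D X S) S (copP D X T) (\<lambda>s. copJ D X T (f s))"
  by (simp add: GFa_def)

lemma GFa_prop: assumes X: "X \<in> obj D" and a: "(S,T,f) \<in> arr FinSet"
  shows "GFa D X (S,T,f) \<in> hom D (copP D X S) (copP D X T)"
    "\<And>s. s \<in> S \<Longrightarrow> cmp D (GFa D X (S,T,f)) (copJ D X S s) = copJ D X T (f s)"
proof -
  have fin: "finite S" "finite T" "f \<in> S \<rightarrow>\<^sub>E T" using a by (auto simp: FS_arr)
  have g: "\<forall>s\<in>S. copJ D X T (f s) \<in> hom D X (copP D X T)" using copJ_hom[OF X fin(2)] fin(3) by auto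
  note c = cind[OF cop_ok[OF X fin(1)] copP_obj[OF X fin(2)] g]
  show "GFa D X (S,T,f) \<in> hom D (copP D X S) (copP D X T)" using c GFa_tuple[OF a] by simp
  show "\<And>s. s \<in> S \<Longrightarrow> cmp D (GFa D X (S,T,f)) (copJ D X S s) = copJ D X T (f s)" using c GFa_tuple[OF a] by simp
qed

lemma GFa_unique: assumes X: "X \<in> obj D" and a: "(S,T,f) \<in> arr FinSet"
  and h: "h \<in> hom D (copP D X S) (copP D X T)" "\<forall>s\<in>S. cmp D h (copJ D X S s) = copJ D X T (f s)"
  shows "h = GFa D X (S,T,f)"
proof -
  have fin: "finite S" using a by (auto simp: FS_arr)
  show ?thesis using cind_unique[OF cop_ok[OF X fin] h] GFa_tuple[OF a] by simp
qed

lemma GF_functor: assumes X: "X \<in> obj D" shows "is_functor FinSet D (GF D X)"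
  unfolding is_functor_def GF_def fst_conv snd_conv
proof (intro conjI ballI allI impI)
  fix S assume "S \<in> obj FinSet" thus "GFo D X S \<in> obj D" using copP_obj[OF X] by (simp add: GFo_def)
next
  fix a assume a: "a \<in> arr FinSet"
  then obtain S T f where st: "a = (S,T,f)" by (cases a)
  show "GFa D X a \<in> hom D (GFo D X (dom FinSet a)) (GFo D X (cod FinSet a))"
    using GFa_prop(1)[OF X a[unfolded st]] a st by (simp add: GFo_def FS_arr)
next
  fix S assume S: "S \<in> obj FinSet"
  have a: "(S,S,restrict id S) \<in> arr FinSet" using S by (simp add: FS_arr)
  have "idt D (copP D X S) = GFa D X (S,S,restrict id S)"
    by (rule GFa_unique[OF X a]) (use S copP_obj[OF X] id_left[OF copJ_hom[OF X]] in auto)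
  thus "GFa D X (idt FinSet S) = idt D (GFo D X S)" using S by (simp add: GFo_def)
next
  fix a b assume a: "a \<in> arr FinSet" and b: "b \<in> arr FinSet" and ab: "cod FinSet a = dom FinSet b"
  obtain S T f where st: "a = (S,T,f)" by (cases a)
  obtain T' U g where st2: "b = (T',U,g)" by (cases b)
  have TT: "T' = T" using ab st st2 by simp
  have a': "(S,T,f) \<in> arr FinSet" and b': "(T,U,g) \<in> arr FinSet" using a b st st2 TT by auto
  have fin: "finite S" "finite T" "finite U" "f \<in> S \<rightarrow>\<^sub>E T" "g \<in> T \<rightarrow>\<^sub>E U" using a' b' by (auto simp: FS_arr)
  have c: "(S,U,restrict (g \<circ> f) S) \<in> arr FinSet" using fin restrict_comp_PiE by (simp add: FS_arr)
  note A = GFa_prop[OF X a'] and B = GFa_prop[OF X b']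
  have "cmp D (GFa D X (T,U,g)) (GFa D X (S,T,f)) = GFa D X (S,U,restrict (g \<circ> f) S)"
  proof (rule GFa_unique[OF X c])
    show "cmp D (GFa D X (T,U,g)) (GFa D X (S,T,f)) \<in> hom D (copP D X S) (copP D X U)" using A B by auto
    show "\<forall>s\<in>S. cmp D (cmp D (GFa D X (T, U, g)) (GFa D X (S, T, f))) (copJ D X S s) = copJ D X U (restrict (g \<circ> f) S s)"
    proof
      fix s assume s: "s \<in> S"
      have fs: "f s \<in> T" using fin s by auto
      have "cmp D (cmp D (GFa D X (T, U, g)) (GFa D X (S, T, f))) (copJ D X S s)
          = cmp D (GFa D X (T, U, g)) (cmp D (GFa D X (S, T, f)) (copJ D X S s))"
        using assoc[OF copJ_hom[OF X fin(1) s] A(1) B(1)] by simp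
      also have "\<dots> = copJ D X U (g (f s))" using A(2)[OF s] B(2)[OF fs] by simp
      finally show "cmp D (cmp D (GFa D X (T, U, g)) (GFa D X (S, T, f))) (copJ D X S s) = copJ D X U (restrict (g \<circ> f) S s)"
        using s by simp
    qed
  qed
  thus "GFa D X (cmp FinSet b a) = cmp D (GFa D X b) (GFa D X a)" using st st2 TT by simp
next
  fix S assume "S \<notin> obj FinSet" thus "GFo D X S = undefined" by (simp add: GFo_def)
next
  fix a assume "a \<notin> arr FinSet" thus "GFa D X a = undefined" by (simp add: GFa_def)
qed

lemma GF_iso: assumes X: "X \<in> obj D" and a: "(S,T,f) \<in> weq FinSet" shows "iso D (GFa D X (S,T,f))"
  using functor_iso[OF GF_functor[OF X], of "(S,T,f)"] a FS_category by (simp add: GF_def FS_weq_iso)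

lemma GF_initial: assumes X: "X \<in> obj D" shows "initial D (GFo D X {})"
  using cop_empty_initial[OF cop_ok[OF X, of "{}"]] by (simp add: GFo_def)


lemma GF_cof: assumes X: "X \<in> obj D" and a: "(S,T,f) \<in> cof FinSet" shows "GFa D X (S,T,f) \<in> cof D"
proof -
  have fin: "finite S" "finite T" "f \<in> S \<rightarrow>\<^sub>E T" "inj_on f S" using a by (auto simp: FS_cof)
  have a': "(S,T,f) \<in> arr FinSet" using fin by (simp add: FS_arr)
  define R where "R = T - f ` S"
  have finR: "finite R" using fin R_def by simp
  obtain Q p q where b: "bcop D (copP D X R) (copP D X S) Q p q" and qc: "q \<in> cof D"
    using bcop_exists[OF copP_obj[OF X finR] copP_obj[OF X fin(1)]] by blast
  have pq: "Q \<in> obj D" "p \<in> hom D (copP D X R) Q" "q \<in> hom D (copP D X S) Q" using b unfolding bcop_def by auto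
  have bij: "bij_betw f S (f ` S)" using fin(4) by (simp add: bij_betw_def)
  note re = cop_reindex[OF cop_ok[OF X fin(1)] bij]
  have disj: "R \<inter> f ` S = {}" using R_def by auto
  have RT: "R \<union> f ` S = T" using R_def fin(3) by auto
  let ?inj = "\<lambda>t. if t \<in> R then cmp D p (copJ D X R t) else cmp D q (copJ D X S (inv_into S f t))"
  have U: "coproduct D (\<lambda>_. X) T Q ?inj"
    using cop_union[OF cop_ok[OF X finR] re disj b] RT by simp
  let ?phi = "cind D Q ?inj T (copP D X T) (copJ D X T)"
  note cmpi = cop_compare_iso[OF U cop_ok[OF X fin(2)]]
  have "cmp D ?phi q = GFa D X (S,T,f)"
  proof (rule GFa_unique[OF X a'])
    show "cmp D ?phi q \<in> hom D (copP D X S) (copP D X T)" using pq cmpi by auto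
    show "\<forall>s\<in>S. cmp D (cmp D ?phi q) (copJ D X S s) = copJ D X T (f s)"
    proof
      fix s assume s: "s \<in> S"
      have fs: "f s \<in> T" "f s \<notin> R" "inv_into S f (f s) = s" using s fin R_def by auto
      have "cmp D (cmp D ?phi q) (copJ D X S s) = cmp D ?phi (cmp D q (copJ D X S s))"
        using assoc[OF copJ_hom[OF X fin(1) s] pq(3) cmpi(2)] by simp
      also have "cmp D q (copJ D X S s) = ?inj (f s)" using fs by simp
      also have "cmp D ?phi (?inj (f s)) = copJ D X T (f s)" using cmpi(3) fs(1) by blast
      finally show "cmp D (cmp D ?phi q) (copJ D X S s) = copJ D X T (f s)" .
    qed
  qed
  moreover have "cmp D ?phi q \<in> cof D"
    by (rule cof_comp[OF qc iso_cof[OF cmpi(1)]]) (use pq cmpi in \<open>simp add: hom_def\<close>)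
  ultimately show ?thesis by simp
qed

lemma GF_po: assumes X: "X \<in> obj D" and po: "pushout FinSet i f j k" and ic: "i \<in> cof FinSet"
  shows "pushout D (GFa D X i) (GFa D X f) (GFa D X j) (GFa D X k)"
proof -
  from FS_po_shape[OF po] obtain A B C P i' f' j' k' where sh: "i = (A,B,i')" "f = (A,C,f')" "j = (B,P,j')" "k = (C,P,k')"
    by blast
  have po': "pushout FinSet (A,B,i') (A,C,f') (B,P,j') (C,P,k')" using po sh by simp
  have inj: "inj_on i' A" using ic sh by (simp add: FS_cof)
  note ch = fs_po_char[OF po' inj]
  have ar: "(A,B,i') \<in> arr FinSet" "(A,C,f') \<in> arr FinSet" "(B,P,j') \<in> arr FinSet" "(C,P,k') \<in> arr FinSet"
    using po' unfolding pushout_def by auto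
  have fin: "finite A" "finite B" "finite C" "finite P" "i' \<in> A \<rightarrow>\<^sub>E B" "f' \<in> A \<rightarrow>\<^sub>E C" "j' \<in> B \<rightarrow>\<^sub>E P" "k' \<in> C \<rightarrow>\<^sub>E P"
    using ar by (auto simp: FS_arr)
  have comm: "restrict (j' \<circ> i') A = restrict (k' \<circ> f') A" using po' unfolding pushout_def by simp
  let ?F = "GFa D X"
  note Fi = GFa_prop[OF X ar(1)] and Ff = GFa_prop[OF X ar(2)] and Fj = GFa_prop[OF X ar(3)] and Fk = GFa_prop[OF X ar(4)]
  have Fcomm: "cmp D (?F (B,P,j')) (?F (A,B,i')) = cmp D (?F (C,P,k')) (?F (A,C,f'))"
  proof -
    have "cmp D (?F (B,P,j')) (?F (A,B,i')) = ?F (cmp FinSet (B,P,j') (A,B,i'))"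
      using functor_comp[OF GF_functor[OF X], of "(A,B,i')" A B "(B,P,j')" P] ar by (simp add: GF_def FS_hom FS_arr)
    also have "\<dots> = ?F (cmp FinSet (C,P,k') (A,C,f'))" using comm by simp
    also have "\<dots> = cmp D (?F (C,P,k')) (?F (A,C,f'))"
      using functor_comp[OF GF_functor[OF X], of "(A,C,f')" A C "(C,P,k')" P] ar by (simp add: GF_def FS_hom FS_arr)
    finally show ?thesis .
  qed
  have univ: "\<exists>!h. h \<in> hom D (copP D X P) Q \<and> cmp D h (?F (B,P,j')) = u \<and> cmp D h (?F (C,P,k')) = v"
    if Q: "Q \<in> obj D" and u: "u \<in> hom D (copP D X B) Q" and v: "v \<in> hom D (copP D X C) Q"
      and uv: "cmp D u (?F (A,B,i')) = cmp D v (?F (A,C,f'))" for Q u v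
  proof -
    have uva: "cmp D u (copJ D X B (i' a)) = cmp D v (copJ D X C (f' a))" if a: "a \<in> A" for a
    proof -
      have "cmp D u (copJ D X B (i' a)) = cmp D u (cmp D (?F (A,B,i')) (copJ D X A a))" using Fi(2)[OF a] by simp
      also have "\<dots> = cmp D (cmp D u (?F (A,B,i'))) (copJ D X A a)" using assoc[OF copJ_hom[OF X fin(1) a] Fi(1) u] .
      also have "\<dots> = cmp D (cmp D v (?F (A,C,f'))) (copJ D X A a)" using uv by simp
      also have "\<dots> = cmp D v (cmp D (?F (A,C,f')) (copJ D X A a))" using assoc[OF copJ_hom[OF X fin(1) a] Ff(1) v] by simp
      also have "\<dots> = cmp D v (copJ D X C (f' a))" using Ff(2)[OF a] by simp
      finally show ?thesis .
    qed
    define g where "g p = (if p \<in> k' ` C then cmp D v (copJ D X C (SOME c. c \<in> C \<and> k' c = p))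
                          else cmp D u (copJ D X B (SOME b. b \<in> B \<and> j' b = p)))" for p
    have gk: "g (k' c) = cmp D v (copJ D X C c)" if c: "c \<in> C" for c
    proof -
      have "(SOME c'. c' \<in> C \<and> k' c' = k' c) = c"
      proof (rule some_equality)
        show "c \<in> C \<and> k' c = k' c" using c by simp
        fix c' assume "c' \<in> C \<and> k' c' = k' c" thus "c' = c" using ch(1) c by (auto dest: inj_onD)
      qed
      thus ?thesis using c by (simp add: g_def)
    qed
    have gj: "g (j' b) = cmp D u (copJ D X B b)" if b: "b \<in> B" for b
    proof (cases "j' b \<in> k' ` C")
      case True
      then obtain c where c: "c \<in> C" "j' b = k' c" by auto
      from ch(2)[OF b c(1) c(2)] obtain a where a: "a \<in> A" "b = i' a" "c = f' a" by blast
      have "g (j' b) = cmp D v (copJ D X C c)" using gk[OF c(1)] c by simp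
      also have "\<dots> = cmp D u (copJ D X B b)" using uva[OF a(1)] a by simp
      finally show ?thesis .
    next
      case False
      have "(SOME b'. b' \<in> B \<and> j' b' = j' b) = b"
      proof (rule some_equality)
        show "b \<in> B \<and> j' b = j' b" using b by simp
        fix b' assume "b' \<in> B \<and> j' b' = j' b"
        thus "b' = b" using ch(3)[OF b, of b'] False by auto
      qed
      thus ?thesis using False by (simp add: g_def)
    qed
    have ghom: "\<forall>p\<in>P. g p \<in> hom D X Q"
    proof
      fix p assume "p \<in> P"
      then consider b where "b \<in> B" "p = j' b" | c where "c \<in> C" "p = k' c" using ch(4) by auto
      then show "g p \<in> hom D X Q"
      proof cases
        case 1 then show ?thesis using gj copJ_hom[OF X fin(2)] u by auto
      next
        case 2 then show ?thesis using gk copJ_hom[OF X fin(3)] v by auto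
      qed
    qed
    note cP = cop_ok[OF X fin(4)]
    let ?h = "cind D (copP D X P) (copJ D X P) P Q g"
    note hc = cind[OF cP Q ghom]
    have hj: "cmp D ?h (?F (B,P,j')) = u"
    proof (rule cop_ext[OF cop_ok[OF X fin(2)]])
      show "cmp D ?h (?F (B,P,j')) \<in> hom D (copP D X B) Q" using hc Fj by auto
      show "u \<in> hom D (copP D X B) Q" by fact
      show "\<forall>s\<in>B. cmp D (cmp D ?h (?F (B,P,j'))) (copJ D X B s) = cmp D u (copJ D X B s)"
      proof
        fix b assume b: "b \<in> B"
        have jb: "j' b \<in> P" using fin b by auto
        have "cmp D (cmp D ?h (?F (B,P,j'))) (copJ D X B b) = cmp D ?h (cmp D (?F (B,P,j')) (copJ D X B b))"
          using assoc[OF copJ_hom[OF X fin(2) b] Fj(1) hc(1)] by simp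
        also have "\<dots> = g (j' b)" using Fj(2)[OF b] hc(2) jb by simp
        finally show "cmp D (cmp D ?h (?F (B,P,j'))) (copJ D X B b) = cmp D u (copJ D X B b)" using gj[OF b] by simp
      qed
    qed
    have hk: "cmp D ?h (?F (C,P,k')) = v"
    proof (rule cop_ext[OF cop_ok[OF X fin(3)]])
      show "cmp D ?h (?F (C,P,k')) \<in> hom D (copP D X C) Q" using hc Fk by auto
      show "v \<in> hom D (copP D X C) Q" by fact
      show "\<forall>s\<in>C. cmp D (cmp D ?h (?F (C,P,k'))) (copJ D X C s) = cmp D v (copJ D X C s)"
      proof
        fix c assume c: "c \<in> C"
        have kc: "k' c \<in> P" using fin c by auto
        have "cmp D (cmp D ?h (?F (C,P,k'))) (copJ D X C c) = cmp D ?h (cmp D (?F (C,P,k')) (copJ D X C c))"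
          using assoc[OF copJ_hom[OF X fin(3) c] Fk(1) hc(1)] by simp
        also have "\<dots> = g (k' c)" using Fk(2)[OF c] hc(2) kc by simp
        finally show "cmp D (cmp D ?h (?F (C,P,k'))) (copJ D X C c) = cmp D v (copJ D X C c)" using gk[OF c] by simp
      qed
    qed
    show ?thesis
    proof (rule ex1I[where a="?h"])
      show "?h \<in> hom D (copP D X P) Q \<and> cmp D ?h (?F (B,P,j')) = u \<and> cmp D ?h (?F (C,P,k')) = v"
        using hc hj hk by simp
      fix h' assume h': "h' \<in> hom D (copP D X P) Q \<and> cmp D h' (?F (B,P,j')) = u \<and> cmp D h' (?F (C,P,k')) = v"
      show "h' = ?h"
      proof (rule cop_ext[OF cP])
        show "h' \<in> hom D (copP D X P) Q" using h' by simp
        show "?h \<in> hom D (copP D X P) Q" using hc by simp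
        show "\<forall>s\<in>P. cmp D h' (copJ D X P s) = cmp D ?h (copJ D X P s)"
        proof
          fix p assume p: "p \<in> P"
          then consider b where "b \<in> B" "p = j' b" | c where "c \<in> C" "p = k' c" using ch(4) by auto
          then show "cmp D h' (copJ D X P p) = cmp D ?h (copJ D X P p)"
          proof cases
            case 1
            have "cmp D h' (copJ D X P p) = cmp D h' (cmp D (?F (B,P,j')) (copJ D X B b))" using Fj(2)[OF 1(1)] 1 by simp
            also have "\<dots> = cmp D (cmp D h' (?F (B,P,j'))) (copJ D X B b)"
              using assoc[OF copJ_hom[OF X fin(2) 1(1)] Fj(1) conjunct1[OF h']] by simp
            also have "\<dots> = g p" using h' gj[OF 1(1)] 1 by simp
            also have "\<dots> = cmp D ?h (copJ D X P p)" using hc(2) p by simp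
            finally show ?thesis .
          next
            case 2
            have "cmp D h' (copJ D X P p) = cmp D h' (cmp D (?F (C,P,k')) (copJ D X C c))" using Fk(2)[OF 2(1)] 2 by simp
            also have "\<dots> = cmp D (cmp D h' (?F (C,P,k'))) (copJ D X C c)"
              using assoc[OF copJ_hom[OF X fin(3) 2(1)] Fk(1) conjunct1[OF h']] by simp
            also have "\<dots> = g p" using h' gk[OF 2(1)] 2 by simp
            also have "\<dots> = cmp D ?h (copJ D X P p)" using hc(2) p by simp
            finally show ?thesis .
          qed
        qed
      qed
    qed
  qed
  show ?thesis unfolding sh pushout_def
  proof (intro conjI ballI impI)
    show "?F (A,B,i') \<in> arr D" "?F (A,C,f') \<in> arr D" "?F (B,P,j') \<in> arr D" "?F (C,P,k') \<in> arr D"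
      using Fi(1) Ff(1) Fj(1) Fk(1) by (auto simp: hom_def)
    show "dom D (?F (A,B,i')) = dom D (?F (A,C,f'))" "dom D (?F (B,P,j')) = cod D (?F (A,B,i'))"
      "dom D (?F (C,P,k')) = cod D (?F (A,C,f'))" "cod D (?F (B,P,j')) = cod D (?F (C,P,k'))"
      using Fi(1) Ff(1) Fj(1) Fk(1) by (auto simp: hom_def)
    show "cmp D (?F (B,P,j')) (?F (A,B,i')) = cmp D (?F (C,P,k')) (?F (A,C,f'))" by (rule Fcomm)
  next
    fix Q u v assume "Q \<in> obj D" "u \<in> hom D (cod D (?F (A,B,i'))) Q" "v \<in> hom D (cod D (?F (A,C,f'))) Q"
      "cmp D u (?F (A,B,i')) = cmp D v (?F (A,C,f'))"
    moreover have "cod D (?F (A,B,i')) = copP D X B" "cod D (?F (A,C,f')) = copP D X C" "cod D (?F (B,P,j')) = copP D X P"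
      using Fi(1) Ff(1) Fj(1) by (auto simp: hom_def)
    ultimately show "\<exists>!h. h \<in> hom D (cod D (?F (B,P,j'))) Q \<and> cmp D h (?F (B,P,j')) = u \<and> cmp D h (?F (C,P,k')) = v"
      using univ by simp
  qed
qed

lemma GF_pcm: assumes X: "X \<in> obj D" shows "pc_morphism FinSet D (GF D X)"
  unfolding pc_morphism_def
proof (intro conjI allI ballI impI)
  show "is_functor FinSet D (GF D X)" by (rule GF_functor[OF X])
next
  fix a assume "a \<in> cof FinSet"
  then show "farr (GF D X) a \<in> cof D" using GF_cof[OF X] by (cases a) (simp add: GF_def)
next
  fix a assume a: "a \<in> weq FinSet"
  then obtain S T f where "a = (S,T,f)" by (cases a)
  then show "farr (GF D X) a \<in> weq D" using GF_iso[OF X] a iso_weq by (simp add: GF_def)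
next
  fix I assume "initial FinSet I"
  then show "initial D (fobj (GF D X) I)" using GF_initial[OF X] by (simp add: FS_initial_iff GF_def)
next
  fix i f j k assume "pushout FinSet i f j k" "i \<in> cof FinSet"
  then show "pushout D (farr (GF D X) i) (farr (GF D X) f) (farr (GF D X) j) (farr (GF D X) k)"
    using GF_po[OF X] by (simp add: GF_def)
qed

end


definition eS :: "nat set \<Rightarrow> nat \<Rightarrow> finarr" where "eS S s = (star, S, restrict (\<lambda>_. s) star)"

lemma eS_hom: "finite S \<Longrightarrow> s \<in> S \<Longrightarrow> eS S s \<in> hom FinSet star S"
  by (simp add: eS_def FS_hom star_def)

lemma eS_comp: "(S,T,f) \<in> arr FinSet \<Longrightarrow> s \<in> S \<Longrightarrow> cmp FinSet (S,T,f) (eS S s) = eS T (f s)"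
  by (auto simp: eS_def star_def intro!: ext)

lemma fs_po_insert: assumes fin: "finite S" and s: "s \<notin> S"
  shows "pushout FinSet ({}, {s}, \<lambda>_. undefined) ({}, S, \<lambda>_. undefined) ({s}, insert s S, restrict id {s}) (S, insert s S, restrict id S)"
  unfolding pushout_def
proof (intro conjI ballI impI)
  show "({}, {s}, \<lambda>_. undefined) \<in> arr FinSet" "({}, S, \<lambda>_. undefined) \<in> arr FinSet"
    "({s}, insert s S, restrict id {s}) \<in> arr FinSet" "(S, insert s S, restrict id S) \<in> arr FinSet"
    using fin by (auto simp: FS_arr PiE_empty_fun)
  show "cmp FinSet ({s}, insert s S, restrict id {s}) ({}, {s}, \<lambda>_. undefined) = cmp FinSet (S, insert s S, restrict id S) ({}, S, \<lambda>_. undefined)"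
    by (simp add: restrict_def)
next
  fix Q u v assume Q: "Q \<in> obj FinSet" and u: "u \<in> hom FinSet (cod FinSet ({}, {s}, \<lambda>_. undefined)) Q"
    and v: "v \<in> hom FinSet (cod FinSet ({}, S, \<lambda>_. undefined)) Q"
  obtain u' where u': "u = ({s},Q,u')" "u' \<in> {s} \<rightarrow>\<^sub>E Q" using u by (cases u) (auto simp: FS_hom)
  obtain v' where v': "v = (S,Q,v')" "v' \<in> S \<rightarrow>\<^sub>E Q" using v by (cases v) (auto simp: FS_hom)
  let ?h = "restrict (\<lambda>x. if x = s then u' s else v' x) (insert s S)"
  show "\<exists>!h. h \<in> hom FinSet (cod FinSet ({s}, insert s S, restrict id {s})) Q \<and>
             cmp FinSet h ({s}, insert s S, restrict id {s}) = u \<and> cmp FinSet h (S, insert s S, restrict id S) = v"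
  proof (rule ex1I[where a="(insert s S, Q, ?h)"])
    have hQ: "?h \<in> insert s S \<rightarrow>\<^sub>E Q" using u' v' by auto
    have 1: "restrict (?h \<circ> restrict id {s}) {s} = u'"
    proof (rule ext)
      fix x show "restrict (?h \<circ> restrict id {s}) {s} x = u' x"
        using PiE_arb[OF u'(2), of x] by (cases "x = s") auto
    qed
    have 2: "restrict (?h \<circ> restrict id S) S = v'"
    proof (rule ext)
      fix x show "restrict (?h \<circ> restrict id S) S x = v' x"
        using PiE_arb[OF v'(2), of x] s by (cases "x \<in> S") auto
    qed
    show "(insert s S, Q, ?h) \<in> hom FinSet (cod FinSet ({s}, insert s S, restrict id {s})) Q \<and>
      cmp FinSet (insert s S, Q, ?h) ({s}, insert s S, restrict id {s}) = u \<and>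
      cmp FinSet (insert s S, Q, ?h) (S, insert s S, restrict id S) = v"
      using hQ 1 2 u' v' fin Q by (simp add: FS_hom)
  next
    fix h assume h: "h \<in> hom FinSet (cod FinSet ({s}, insert s S, restrict id {s})) Q \<and>
             cmp FinSet h ({s}, insert s S, restrict id {s}) = u \<and> cmp FinSet h (S, insert s S, restrict id S) = v"
    obtain h' where h': "h = (insert s S, Q, h')" "h' \<in> insert s S \<rightarrow>\<^sub>E Q" using h by (cases h) (auto simp: FS_hom)
    have e1: "restrict (h' \<circ> restrict id {s}) {s} = u'" and e2: "restrict (h' \<circ> restrict id S) S = v'"
      using h h' u' v' by auto
    have "h' = ?h"
    proof (rule ext)
      fix x show "h' x = ?h x"
      proof (cases "x = s")
        case True
        then show ?thesis using fun_cong[OF e1, of s] by simp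
      next
        case False
        show ?thesis
        proof (cases "x \<in> S")
          case True
          then show ?thesis using fun_cong[OF e2, of x] False by simp
        next
          case False2: False
          then show ?thesis using False PiE_arb[OF h'(2), of x] by simp
        qed
      qed
    qed
    thus "h = (insert s S, Q, ?h)" using h' by simp
  qed
qed simp_all

context pcc begin

lemma pcm_functor: "pc_morphism FinSet D F \<Longrightarrow> is_functor FinSet D F" unfolding pc_morphism_def by auto

lemma pcm_cop: assumes F: "pc_morphism FinSet D F" and fin: "finite S"
  shows "coproduct D (\<lambda>_. fobj F star) S (fobj F S) (\<lambda>s. farr F (eS S s))"
  using fin
proof (induction S rule: finite_induct)
  case empty
  have "initial D (fobj F {})" using F FS_initial_empty unfolding pc_morphism_def by auto
  thus ?case by (rule cop_empty)
next
  case (insert s S)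
  note Ff = pcm_functor[OF F]
  let ?i0 = "({}, {s}, \<lambda>_. undefined)::finarr" and ?f0 = "({}, S, \<lambda>_. undefined)::finarr"
    and ?j0 = "({s}, insert s S, restrict id {s})" and ?k0 = "(S, insert s S, restrict id S)"
  have po0: "pushout FinSet ?i0 ?f0 ?j0 ?k0" by (rule fs_po_insert[OF insert(1,2)])
  have ic: "?i0 \<in> cof FinSet" by (auto simp: FS_cof PiE_def extensional_def)
  have poD: "pushout D (farr F ?i0) (farr F ?f0) (farr F ?j0) (farr F ?k0)"
    using F po0 ic unfolding pc_morphism_def by blast
  have h: "?i0 \<in> hom FinSet {} {s}" "?f0 \<in> hom FinSet {} S" "?j0 \<in> hom FinSet {s} (insert s S)"
    "?k0 \<in> hom FinSet S (insert s S)" using insert(1) by (auto simp: FS_hom PiE_empty_fun)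
  note Fh = functor_hom[OF Ff h(1)] functor_hom[OF Ff h(2)] functor_hom[OF Ff h(3)] functor_hom[OF Ff h(4)]
  have ini: "initial D (fobj F {})" using F FS_initial_empty unfolding pc_morphism_def by auto
  have b: "bcop D (fobj F {s}) (fobj F S) (fobj F (insert s S)) (farr F ?j0) (farr F ?k0)"
    using pushout_initial_bcop[OF poD] ini Fh by (simp add: hom_def)
  have sobj: "fobj F star \<in> obj D" using Ff unfolding is_functor_def by (simp add: star_def)
  have ehom: "eS {s} s \<in> hom FinSet star {s}" using eS_hom by simp
  have eiso: "iso FinSet (eS {s} s)" by (simp add: eS_def FS_iso star_def bij_betw_def)
  have phi: "iso D (farr F (eS {s} s))" "farr F (eS {s} s) \<in> hom D (fobj F star) (fobj F {s})"
    using functor_iso[OF Ff eiso FS_category] functor_hom[OF Ff ehom] by auto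
  note c1 = cop_iso[OF cop_single[OF sobj, of s] phi]
  have U: "coproduct D (\<lambda>_. fobj F star) ({s} \<union> S) (fobj F (insert s S))
     (\<lambda>t. if t \<in> {s} then cmp D (farr F ?j0) (cmp D (farr F (eS {s} s)) (idt D (fobj F star)))
          else cmp D (farr F ?k0) (farr F (eS S t)))"
    by (rule cop_union[OF c1 insert(3) _ b]) (use insert(2) in auto)
  show ?case
  proof (rule cop_cong)
    show "coproduct D (\<lambda>_. fobj F star) (insert s S) (fobj F (insert s S))
     (\<lambda>t. if t \<in> {s} then cmp D (farr F ?j0) (cmp D (farr F (eS {s} s)) (idt D (fobj F star)))
          else cmp D (farr F ?k0) (farr F (eS S t)))" using U by simp
    show "\<forall>t\<in>insert s S. farr F (eS (insert s S) t) = (if t \<in> {s} then cmp D (farr F ?j0) (cmp D (farr F (eS {s} s)) (idt D (fobj F star)))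
          else cmp D (farr F ?k0) (farr F (eS S t)))"
    proof
      fix t assume t: "t \<in> insert s S"
      show "farr F (eS (insert s S) t) = (if t \<in> {s} then cmp D (farr F ?j0) (cmp D (farr F (eS {s} s)) (idt D (fobj F star)))
          else cmp D (farr F ?k0) (farr F (eS S t)))"
      proof (cases "t = s")
        case True
        have "cmp D (farr F ?j0) (cmp D (farr F (eS {s} s)) (idt D (fobj F star))) = cmp D (farr F ?j0) (farr F (eS {s} s))"
          using id_right[OF phi(2)] by simp
        also have "\<dots> = farr F (cmp FinSet ?j0 (eS {s} s))" using functor_comp[OF Ff ehom h(3)] by simp
        also have "cmp FinSet ?j0 (eS {s} s) = eS (insert s S) s" using eS_comp[of "{s}" "insert s S" "restrict id {s}" s] h(3)
          by (simp add: hom_def)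
        finally have calc: "cmp D (farr F ?j0) (cmp D (farr F (eS {s} s)) (idt D (fobj F star))) = farr F (eS (insert s S) s)" .
        show ?thesis unfolding True using calc[symmetric] by (simp only: singleton_iff simp_thms if_True)
      next
        case False
        then have tS: "t \<in> S" using t by simp
        have eh: "eS S t \<in> hom FinSet star S" using eS_hom[OF insert(1) tS] .
        have "cmp D (farr F ?k0) (farr F (eS S t)) = farr F (cmp FinSet ?k0 (eS S t))" using functor_comp[OF Ff eh h(4)] by simp
        also have "cmp FinSet ?k0 (eS S t) = eS (insert s S) t" using eS_comp[of S "insert s S" "restrict id S" t] h(4) tS
          by (simp add: hom_def)
        finally have calc: "cmp D (farr F ?k0) (farr F (eS S t)) = farr F (eS (insert s S) t)" .
        have "t \<notin> {s}" using False by simp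
        then show ?thesis using calc[symmetric] by (simp only: if_False)
      qed
    qed
  qed simp
qed

end


lemma funcat_obj[simp]: "obj (funcat C D S) = S" by (simp add: funcat_def)
lemma funcat_arr: "(F,G,\<eta>) \<in> arr (funcat C D S) \<longleftrightarrow> F \<in> S \<and> G \<in> S \<and> natural C D F G \<eta>" by (simp add: funcat_def)
lemma funcat_dom[simp]: "dom (funcat C D S) (F,G,\<eta>) = F" by (simp add: funcat_def)
lemma funcat_cod[simp]: "cod (funcat C D S) (F,G,\<eta>) = G" by (simp add: funcat_def)
lemma funcat_cmp[simp]: "cmp (funcat C D S) (G',H,\<theta>) (F,G,\<eta>) = (F,H,\<lambda>X. if X \<in> obj C then cmp D (\<theta> X) (\<eta> X) else undefined)"
  by (simp add: funcat_def)
lemma funcat_idt[simp]: "idt (funcat C D S) F = (F,F,\<lambda>X. if X \<in> obj C then idt D (fobj F X) else undefined)"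
  by (simp add: funcat_def)
lemma funcat_hom: "(F',G',\<eta>) \<in> hom (funcat C D S) F G \<longleftrightarrow> F' = F \<and> G' = G \<and> F \<in> S \<and> G \<in> S \<and> natural C D F G \<eta>"
  by (auto simp: hom_def funcat_arr)

context cat begin

lemma id_natural: assumes "category A" "is_functor A C F"
  shows "natural A C F F (\<lambda>X. if X \<in> obj A then idt C (fobj F X) else undefined)"
  unfolding natural_def
proof (intro conjI ballI allI impI)
  fix X assume "X \<in> obj A" thus "(if X \<in> obj A then idt C (fobj F X) else undefined) \<in> hom C (fobj F X) (fobj F X)"
    using assms(2) unfolding is_functor_def by auto
next
  fix f assume f: "f \<in> arr A"
  have o: "dom A f \<in> obj A" "cod A f \<in> obj A" using assms(1) f unfolding category_def by auto
  have h: "farr F f \<in> hom C (fobj F (dom A f)) (fobj F (cod A f))" using assms(2) f unfolding is_functor_def by auto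
  show "cmp C (if cod A f \<in> obj A then idt C (fobj F (cod A f)) else undefined) (farr F f) =
        cmp C (farr F f) (if dom A f \<in> obj A then idt C (fobj F (dom A f)) else undefined)"
    using o id_left[OF h] id_right[OF h] by simp
qed simp

lemma comp_natural: assumes "category A" "is_functor A C F" "is_functor A C G" "is_functor A C H"
  "natural A C F G \<eta>" "natural A C G H \<theta>"
  shows "natural A C F H (\<lambda>X. if X \<in> obj A then cmp C (\<theta> X) (\<eta> X) else undefined)"
  unfolding natural_def
proof (intro conjI ballI allI impI)
  fix X assume "X \<in> obj A" thus "(if X \<in> obj A then cmp C (\<theta> X) (\<eta> X) else undefined) \<in> hom C (fobj F X) (fobj H X)"
    using assms(5,6) unfolding natural_def by auto
next
  fix f assume f: "f \<in> arr A"
  let ?X = "dom A f" and ?Y = "cod A f"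
  have o: "?X \<in> obj A" "?Y \<in> obj A" using assms(1) f unfolding category_def by auto
  have e: "\<eta> ?X \<in> hom C (fobj F ?X) (fobj G ?X)" "\<eta> ?Y \<in> hom C (fobj F ?Y) (fobj G ?Y)"
    "\<theta> ?X \<in> hom C (fobj G ?X) (fobj H ?X)" "\<theta> ?Y \<in> hom C (fobj G ?Y) (fobj H ?Y)"
    using assms(5,6) o unfolding natural_def by auto
  have n1: "cmp C (\<eta> ?Y) (farr F f) = cmp C (farr G f) (\<eta> ?X)"
    and n2: "cmp C (\<theta> ?Y) (farr G f) = cmp C (farr H f) (\<theta> ?X)" using assms(5,6) f unfolding natural_def by auto
  have Ff: "farr F f \<in> hom C (fobj F ?X) (fobj F ?Y)" "farr G f \<in> hom C (fobj G ?X) (fobj G ?Y)"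
    "farr H f \<in> hom C (fobj H ?X) (fobj H ?Y)"
    using assms(2,3,4) f unfolding is_functor_def by auto
  have "cmp C (cmp C (\<theta> ?Y) (\<eta> ?Y)) (farr F f) = cmp C (\<theta> ?Y) (cmp C (\<eta> ?Y) (farr F f))"
    using assoc[OF Ff(1) e(2) e(4)] by simp
  also have "\<dots> = cmp C (\<theta> ?Y) (cmp C (farr G f) (\<eta> ?X))" using n1 by simp
  also have "\<dots> = cmp C (cmp C (\<theta> ?Y) (farr G f)) (\<eta> ?X)" using assoc[OF e(1) Ff(2) e(4)] .
  also have "\<dots> = cmp C (cmp C (farr H f) (\<theta> ?X)) (\<eta> ?X)" using n2 by simp
  also have "\<dots> = cmp C (farr H f) (cmp C (\<theta> ?X) (\<eta> ?X))" using assoc[OF e(1) e(3) Ff(3)] by simp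
  finally show "cmp C (if ?Y \<in> obj A then cmp C (\<theta> ?Y) (\<eta> ?Y) else undefined) (farr F f) =
        cmp C (farr H f) (if ?X \<in> obj A then cmp C (\<theta> ?X) (\<eta> ?X) else undefined)" using o by simp
qed simp

lemma iso_natural: assumes "category A" "is_functor A C F" "is_functor A C G" "natural A C F G \<eta>"
  "\<forall>X\<in>obj A. iso C (\<eta> X)" "F \<in> S" "G \<in> S"
  shows "iso (funcat A C S) (F,G,\<eta>)"
proof -
  define \<psi> where "\<psi> X = (if X \<in> obj A then (SOME g. g \<in> hom C (fobj G X) (fobj F X) \<and> cmp C g (\<eta> X) = idt C (fobj F X) \<and> cmp C (\<eta> X) g = idt C (fobj G X)) else undefined)" for X
  have eh: "\<eta> X \<in> hom C (fobj F X) (fobj G X)" if "X \<in> obj A" for X using assms(4) that unfolding natural_def by auto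
  have psi: "\<psi> X \<in> hom C (fobj G X) (fobj F X) \<and> cmp C (\<psi> X) (\<eta> X) = idt C (fobj F X) \<and> cmp C (\<eta> X) (\<psi> X) = idt C (fobj G X)"
    if X: "X \<in> obj A" for X
  proof -
    from isoE[OF bspec[OF assms(5) X] eh[OF X]] obtain g where "g \<in> hom C (fobj G X) (fobj F X) \<and> cmp C g (\<eta> X) = idt C (fobj F X) \<and> cmp C (\<eta> X) g = idt C (fobj G X)"
      by blast
    from someI[of "\<lambda>g. g \<in> hom C (fobj G X) (fobj F X) \<and> cmp C g (\<eta> X) = idt C (fobj F X) \<and> cmp C (\<eta> X) g = idt C (fobj G X)", OF this]
    show ?thesis using X by (simp add: \<psi>_def)
  qed
  have nat: "natural A C G F \<psi>"
    unfolding natural_def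
  proof (intro conjI ballI allI impI)
    fix X assume "X \<in> obj A" thus "\<psi> X \<in> hom C (fobj G X) (fobj F X)" using psi by auto
  next
    fix X assume "X \<notin> obj A" thus "\<psi> X = undefined" by (simp add: \<psi>_def)
  next
    fix f assume f: "f \<in> arr A"
    let ?X = "dom A f" and ?Y = "cod A f"
    have o: "?X \<in> obj A" "?Y \<in> obj A" using assms(1) f unfolding category_def by auto
    have Ff: "farr F f \<in> hom C (fobj F ?X) (fobj F ?Y)" "farr G f \<in> hom C (fobj G ?X) (fobj G ?Y)"
      using assms(2,3) f unfolding is_functor_def by auto
    have n: "cmp C (\<eta> ?Y) (farr F f) = cmp C (farr G f) (\<eta> ?X)" using assms(4) f unfolding natural_def by auto
    note pX = psi[OF o(1)] and pY = psi[OF o(2)]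
    show "cmp C (\<psi> ?Y) (farr G f) = cmp C (farr F f) (\<psi> ?X)"
    proof (rule iso_cancel_right[OF bspec[OF assms(5) o(1)] eh[OF o(1)]])
      show "cmp C (\<psi> ?Y) (farr G f) \<in> hom C (fobj G ?X) (fobj F ?Y)" using pY Ff by auto
      show "cmp C (farr F f) (\<psi> ?X) \<in> hom C (fobj G ?X) (fobj F ?Y)" using pX Ff by auto
      have "cmp C (cmp C (\<psi> ?Y) (farr G f)) (\<eta> ?X) = cmp C (\<psi> ?Y) (cmp C (farr G f) (\<eta> ?X))"
        using assoc[OF eh[OF o(1)] Ff(2) conjunct1[OF pY]] by simp
      also have "\<dots> = cmp C (\<psi> ?Y) (cmp C (\<eta> ?Y) (farr F f))" using n by simp
      also have "\<dots> = cmp C (cmp C (\<psi> ?Y) (\<eta> ?Y)) (farr F f)" using assoc[OF Ff(1) eh[OF o(2)] conjunct1[OF pY]] by simp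
      also have "\<dots> = farr F f" using pY id_left[OF Ff(1)] by simp
      also have "\<dots> = cmp C (farr F f) (cmp C (\<psi> ?X) (\<eta> ?X))" using pX id_right[OF Ff(1)] by simp
      also have "\<dots> = cmp C (cmp C (farr F f) (\<psi> ?X)) (\<eta> ?X)" using assoc[OF eh[OF o(1)] conjunct1[OF pX] Ff(1)] by simp
      finally show "cmp C (cmp C (\<psi> ?Y) (farr G f)) (\<eta> ?X) = cmp C (cmp C (farr F f) (\<psi> ?X)) (\<eta> ?X)" .
    qed
  qed
  show ?thesis unfolding iso_def
  proof (intro conjI bexI)
    show "(F,G,\<eta>) \<in> arr (funcat A C S)" using assms by (simp add: funcat_arr)
    show "(G,F,\<psi>) \<in> hom (funcat A C S) (cod (funcat A C S) (F,G,\<eta>)) (dom (funcat A C S) (F,G,\<eta>))"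
      using assms nat by (simp add: funcat_hom)
    show "cmp (funcat A C S) (G,F,\<psi>) (F,G,\<eta>) = idt (funcat A C S) (dom (funcat A C S) (F,G,\<eta>))"
      using psi by (auto intro!: ext)
    show "cmp (funcat A C S) (F,G,\<eta>) (G,F,\<psi>) = idt (funcat A C S) (cod (funcat A C S) (F,G,\<eta>))"
      using psi by (auto intro!: ext)
  qed
qed

end


definition Geta :: "('o,'a,'z) cat_scheme \<Rightarrow> 'a \<Rightarrow> nat set \<Rightarrow> 'a" where
  "Geta D g = (\<lambda>S. if S \<in> obj FinSet then cind D (copP D (dom D g) S) (copJ D (dom D g) S) S (copP D (cod D g) S)
      (\<lambda>s. cmp D (copJ D (cod D g) S s) g) else undefined)"

definition Gq where
  "Gq D = (\<lambda>X. if X \<in> obj D then GF D X else undefined,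
           \<lambda>g. if g \<in> arr D then (GF D (dom D g), GF D (cod D g), Geta D g) else undefined)"

definition thF where
  "thF D F = (\<lambda>S. if S \<in> obj FinSet then cind D (fobj F S) (\<lambda>s. farr F (eS S s)) S (copP D (fobj F star) S) (copJ D (fobj F star) S)
     else undefined)"

definition etaU where
  "etaU D F = (if F \<in> obj (PCMor FinSet D) then (F, GF D (fobj F star), thF D F) else undefined)"

definition epsC where "epsC D = (\<lambda>X. if X \<in> obj D then idt D X else undefined)"

lemma copP_star: "copP D X star = X" "copJ D X star = (\<lambda>_. idt D X)"
  by (simp_all add: copP_def copJ_def copPJ_def)

lemma PCMor_obj: "obj (PCMor C D) = {F. pc_morphism C D F}" by (simp add: PCMor_def)
lemma PCMor_arr: "(F,G,\<eta>) \<in> arr (PCMor C D) \<longleftrightarrow> pc_morphism C D F \<and> pc_morphism C D G \<and> natural C D F G \<eta>"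
  by (simp add: PCMor_def funcat_arr)
lemma PCMor_hom: "(F',G',\<eta>) \<in> hom (PCMor C D) F G \<longleftrightarrow> F' = F \<and> G' = G \<and> pc_morphism C D F \<and> pc_morphism C D G \<and> natural C D F G \<eta>"
  by (simp add: PCMor_def funcat_hom)

lemma PCMor_idt: "idt (PCMor C D) F = (F,F,\<lambda>X. if X \<in> obj C then idt D (fobj F X) else undefined)"
  by (simp add: PCMor_def)
lemma PCMor_cmp: "cmp (PCMor C D) (G',H,\<theta>) (F,G,\<eta>) = (F,H,\<lambda>X. if X \<in> obj C then cmp D (\<theta> X) (\<eta> X) else undefined)"
  by (simp add: PCMor_def)
lemma PCMor_dom: "dom (PCMor C D) (F,G,\<eta>) = F" by (simp add: PCMor_def)
lemma PCMor_cod: "cod (PCMor C D) (F,G,\<eta>) = G" by (simp add: PCMor_def)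

lemma star_obj[simp]: "star \<in> obj FinSet" by (simp add: star_def)

context pcc begin

lemma Geta_prop: assumes g: "g \<in> hom D X Y" and S: "finite S"
  shows "Geta D g S \<in> hom D (copP D X S) (copP D Y S)" "\<forall>s\<in>S. cmp D (Geta D g S) (copJ D X S s) = cmp D (copJ D Y S s) g"
proof -
  have XY: "X \<in> obj D" "Y \<in> obj D" using hom_obj[OF g] by auto
  have gd: "dom D g = X" "cod D g = Y" using g by (auto simp: hom_def)
  have "\<forall>s\<in>S. cmp D (copJ D Y S s) g \<in> hom D X (copP D Y S)" using copJ_hom[OF XY(2) S] g by auto
  note c = cind[OF cop_ok[OF XY(1) S] copP_obj[OF XY(2) S] this]
  show "Geta D g S \<in> hom D (copP D X S) (copP D Y S)" "\<forall>s\<in>S. cmp D (Geta D g S) (copJ D X S s) = cmp D (copJ D Y S s) g"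
    using c S gd by (simp_all add: Geta_def)
qed

lemma Geta_unique: assumes g: "g \<in> hom D X Y" and S: "finite S" and h: "h \<in> hom D (copP D X S) (copP D Y S)"
  "\<forall>s\<in>S. cmp D h (copJ D X S s) = cmp D (copJ D Y S s) g"
  shows "h = Geta D g S"
proof -
  have XY: "X \<in> obj D" "Y \<in> obj D" using hom_obj[OF g] by auto
  have gd: "dom D g = X" "cod D g = Y" using g by (auto simp: hom_def)
  show ?thesis using cind_unique[OF cop_ok[OF XY(1) S] h] S gd by (simp add: Geta_def)
qed

lemma Geta_natural: assumes g: "g \<in> hom D X Y" shows "natural FinSet D (GF D X) (GF D Y) (Geta D g)"
  unfolding natural_def
proof (intro conjI ballI allI impI)
  have XY: "X \<in> obj D" "Y \<in> obj D" using hom_obj[OF g] by auto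
  fix S assume "S \<in> obj FinSet" thus "Geta D g S \<in> hom D (fobj (GF D X) S) (fobj (GF D Y) S)"
    using Geta_prop[OF g] by (simp add: GF_def GFo_def)
next
  have XY: "X \<in> obj D" "Y \<in> obj D" using hom_obj[OF g] by auto
  fix a assume a: "a \<in> arr FinSet"
  then obtain S T f where st: "a = (S,T,f)" by (cases a)
  have a': "(S,T,f) \<in> arr FinSet" using a st by simp
  have fin: "finite S" "finite T" "f \<in> S \<rightarrow>\<^sub>E T" using a' by (auto simp: FS_arr)
  note GX = GFa_prop[OF XY(1) a'] and GY = GFa_prop[OF XY(2) a'] and eS' = Geta_prop[OF g fin(1)] and eT = Geta_prop[OF g fin(2)]
  have "cmp D (Geta D g T) (GFa D X (S,T,f)) = cmp D (GFa D Y (S,T,f)) (Geta D g S)"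
  proof (rule cop_ext[OF cop_ok[OF XY(1) fin(1)]])
    show "cmp D (Geta D g T) (GFa D X (S,T,f)) \<in> hom D (copP D X S) (copP D Y T)" using GX eT by auto
    show "cmp D (GFa D Y (S,T,f)) (Geta D g S) \<in> hom D (copP D X S) (copP D Y T)" using GY eS' by auto
    show "\<forall>s\<in>S. cmp D (cmp D (Geta D g T) (GFa D X (S,T,f))) (copJ D X S s) = cmp D (cmp D (GFa D Y (S,T,f)) (Geta D g S)) (copJ D X S s)"
    proof
      fix s assume s: "s \<in> S"
      have fs: "f s \<in> T" using fin s by auto
      have "cmp D (cmp D (Geta D g T) (GFa D X (S,T,f))) (copJ D X S s) = cmp D (Geta D g T) (cmp D (GFa D X (S,T,f)) (copJ D X S s))"
        using assoc[OF copJ_hom[OF XY(1) fin(1) s] GX(1) eT(1)] by simp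
      also have "\<dots> = cmp D (copJ D Y T (f s)) g" using GX(2)[OF s] eT(2) fs by simp
      finally have 1: "cmp D (cmp D (Geta D g T) (GFa D X (S,T,f))) (copJ D X S s) = cmp D (copJ D Y T (f s)) g" .
      have "cmp D (cmp D (GFa D Y (S,T,f)) (Geta D g S)) (copJ D X S s) = cmp D (GFa D Y (S,T,f)) (cmp D (Geta D g S) (copJ D X S s))"
        using assoc[OF copJ_hom[OF XY(1) fin(1) s] eS'(1) GY(1)] by simp
      also have "\<dots> = cmp D (GFa D Y (S,T,f)) (cmp D (copJ D Y S s) g)" using eS'(2) s by simp
      also have "\<dots> = cmp D (cmp D (GFa D Y (S,T,f)) (copJ D Y S s)) g" using assoc[OF g copJ_hom[OF XY(2) fin(1) s] GY(1)] .
      also have "\<dots> = cmp D (copJ D Y T (f s)) g" using GY(2)[OF s] by simp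
      finally show "cmp D (cmp D (Geta D g T) (GFa D X (S,T,f))) (copJ D X S s) = cmp D (cmp D (GFa D Y (S,T,f)) (Geta D g S)) (copJ D X S s)"
        using 1 by simp
    qed
  qed
  thus "cmp D (Geta D g (cod FinSet a)) (farr (GF D X) a) = cmp D (farr (GF D Y) a) (Geta D g (dom FinSet a))"
    using st by (simp add: GF_def)
next
  fix S assume "S \<notin> obj FinSet" thus "Geta D g S = undefined" by (simp add: Geta_def)
qed

lemma Gq_functor: "is_functor D (PCMor FinSet D) (Gq D)"
  unfolding is_functor_def
proof (intro conjI ballI allI impI)
  fix X assume "X \<in> obj D" thus "fobj (Gq D) X \<in> obj (PCMor FinSet D)" using GF_pcm by (simp add: Gq_def PCMor_obj)
next
  fix g assume g: "g \<in> arr D"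
  have gh: "g \<in> hom D (dom D g) (cod D g)" using g by (simp add: hom_def)
  have o: "dom D g \<in> obj D" "cod D g \<in> obj D" using hom_obj[OF gh] by auto
  show "farr (Gq D) g \<in> hom (PCMor FinSet D) (fobj (Gq D) (dom D g)) (fobj (Gq D) (cod D g))"
    using g o GF_pcm Geta_natural[OF gh] by (simp add: Gq_def PCMor_hom)
next
  fix X assume X: "X \<in> obj D"
  have ih: "idt D X \<in> hom D X X" using X by auto
  have ia: "idt D X \<in> arr D" "dom D (idt D X) = X" "cod D (idt D X) = X" using ih by (auto simp: hom_def)
  have "Geta D (idt D X) = (\<lambda>S. if S \<in> obj FinSet then idt D (fobj (GF D X) S) else undefined)"
  proof (rule ext)
    fix S show "Geta D (idt D X) S = (if S \<in> obj FinSet then idt D (fobj (GF D X) S) else undefined)"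
    proof (cases "S \<in> obj FinSet")
      case True
      then have S: "finite S" by simp
      have "idt D (copP D X S) = Geta D (idt D X) S"
      proof (rule Geta_unique[OF ih S])
        show "idt D (copP D X S) \<in> hom D (copP D X S) (copP D X S)" using copP_obj[OF X S] by auto
        show "\<forall>s\<in>S. cmp D (idt D (copP D X S)) (copJ D X S s) = cmp D (copJ D X S s) (idt D X)"
          using id_left[OF copJ_hom[OF X S]] id_right[OF copJ_hom[OF X S]] by simp
      qed
      then show ?thesis using True by (simp add: GF_def GFo_def)
    next
      case False
      then show ?thesis by (simp add: Geta_def)
    qed
  qed
  then show "farr (Gq D) (idt D X) = idt (PCMor FinSet D) (fobj (Gq D) X)"
    using X ia by (simp add: Gq_def PCMor_idt)
next
  fix f g assume f: "f \<in> arr D" and g: "g \<in> arr D" and fg: "cod D f = dom D g"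
  let ?X = "dom D f" and ?Y = "cod D f" and ?Z = "cod D g"
  have fh: "f \<in> hom D ?X ?Y" and gh: "g \<in> hom D ?Y ?Z" using f g fg by (auto simp: hom_def)
  have gfh: "cmp D g f \<in> hom D ?X ?Z" using comp_hom[OF fh gh] .
  have gfa: "cmp D g f \<in> arr D" "dom D (cmp D g f) = ?X" "cod D (cmp D g f) = ?Z" using gfh by (auto simp: hom_def)
  have "Geta D (cmp D g f) = (\<lambda>S. if S \<in> obj FinSet then cmp D (Geta D g S) (Geta D f S) else undefined)"
  proof (rule ext)
    fix S show "Geta D (cmp D g f) S = (if S \<in> obj FinSet then cmp D (Geta D g S) (Geta D f S) else undefined)"
    proof (cases "S \<in> obj FinSet")
      case True
      then have S: "finite S" by simp
      have o: "?X \<in> obj D" "?Y \<in> obj D" "?Z \<in> obj D" using hom_obj[OF fh] hom_obj[OF gh] by auto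
      note ef = Geta_prop[OF fh S] and eg = Geta_prop[OF gh S]
      have "cmp D (Geta D g S) (Geta D f S) = Geta D (cmp D g f) S"
      proof (rule Geta_unique[OF gfh S])
        show "cmp D (Geta D g S) (Geta D f S) \<in> hom D (copP D ?X S) (copP D ?Z S)" using ef eg by auto
        show "\<forall>s\<in>S. cmp D (cmp D (Geta D g S) (Geta D f S)) (copJ D ?X S s) = cmp D (copJ D ?Z S s) (cmp D g f)"
        proof
          fix s assume s: "s \<in> S"
          have "cmp D (cmp D (Geta D g S) (Geta D f S)) (copJ D ?X S s) = cmp D (Geta D g S) (cmp D (Geta D f S) (copJ D ?X S s))"
            using assoc[OF copJ_hom[OF o(1) S s] ef(1) eg(1)] by simp
          also have "\<dots> = cmp D (Geta D g S) (cmp D (copJ D ?Y S s) f)" using ef(2) s by simp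
          also have "\<dots> = cmp D (cmp D (Geta D g S) (copJ D ?Y S s)) f" using assoc[OF fh copJ_hom[OF o(2) S s] eg(1)] .
          also have "\<dots> = cmp D (cmp D (copJ D ?Z S s) g) f" using eg(2) s by simp
          also have "\<dots> = cmp D (copJ D ?Z S s) (cmp D g f)" using assoc[OF fh gh copJ_hom[OF o(3) S s]] by simp
          finally show "cmp D (cmp D (Geta D g S) (Geta D f S)) (copJ D ?X S s) = cmp D (copJ D ?Z S s) (cmp D g f)" .
        qed
      qed
      then show ?thesis using True by simp
    next
      case False
      then show ?thesis by (simp add: Geta_def)
    qed
  qed
  then show "farr (Gq D) (cmp D g f) = cmp (PCMor FinSet D) (farr (Gq D) g) (farr (Gq D) f)"
    using f g gfa fg by (simp add: Gq_def PCMor_cmp)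
next
  fix X assume "X \<notin> obj D" thus "fobj (Gq D) X = undefined" by (simp add: Gq_def)
next
  fix g assume "g \<notin> arr D" thus "farr (Gq D) g = undefined" by (simp add: Gq_def)
qed

lemma pcm_star_obj: assumes "pc_morphism FinSet D F" shows "fobj F star \<in> obj D"
proof -
  have "\<forall>X\<in>obj FinSet. fobj F X \<in> obj D" using pcm_functor[OF assms] unfolding is_functor_def by blast
  thus ?thesis using star_obj by blast
qed

lemma pcm_natural_hom: assumes "natural FinSet D F G \<eta>" "finite S"
  shows "\<eta> S \<in> hom D (fobj F S) (fobj G S)" using assms unfolding natural_def by auto

lemma evf_functor: "is_functor (PCMor FinSet D) D (evf D)"
  unfolding is_functor_def
proof (intro conjI ballI allI impI)
  fix F assume "F \<in> obj (PCMor FinSet D)"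
  then show "fobj (evf D) F \<in> obj D" using pcm_star_obj by (auto simp: evf_def PCMor_obj)
next
  fix t assume t: "t \<in> arr (PCMor FinSet D)"
  then obtain F G \<eta> where tt: "t = (F,G,\<eta>)" by (cases t)
  have a: "pc_morphism FinSet D F" "pc_morphism FinSet D G" "natural FinSet D F G \<eta>" using t tt by (auto simp: PCMor_arr)
  show "farr (evf D) t \<in> hom D (fobj (evf D) (dom (PCMor FinSet D) t)) (fobj (evf D) (cod (PCMor FinSet D) t))"
    using t tt a pcm_natural_hom[OF a(3), of star] by (simp add: evf_def PCMor_obj PCMor_dom PCMor_cod star_def)
next
  fix F assume F: "F \<in> obj (PCMor FinSet D)"
  then have Fp: "pc_morphism FinSet D F" by (simp add: PCMor_obj)
  have "idt (PCMor FinSet D) F \<in> arr (PCMor FinSet D)"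
    using id_natural[OF FS_category pcm_functor[OF Fp]] Fp by (simp add: PCMor_idt PCMor_arr)
  then show "farr (evf D) (idt (PCMor FinSet D) F) = idt D (fobj (evf D) F)" using F by (simp add: evf_def PCMor_idt star_def)
next
  fix t1 t2 assume t1: "t1 \<in> arr (PCMor FinSet D)" and t2: "t2 \<in> arr (PCMor FinSet D)"
    and c: "cod (PCMor FinSet D) t1 = dom (PCMor FinSet D) t2"
  obtain F G \<eta> where tt1: "t1 = (F,G,\<eta>)" by (cases t1)
  obtain G' H \<theta> where tt2: "t2 = (G',H,\<theta>)" by (cases t2)
  have GG: "G' = G" using c tt1 tt2 by (simp add: PCMor_dom PCMor_cod)
  have a: "pc_morphism FinSet D F" "pc_morphism FinSet D G" "pc_morphism FinSet D H" "natural FinSet D F G \<eta>" "natural FinSet D G H \<theta>"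
    using t1 t2 tt1 tt2 GG by (auto simp: PCMor_arr)
  have "cmp (PCMor FinSet D) t2 t1 \<in> arr (PCMor FinSet D)"
    using comp_natural[OF FS_category pcm_functor[OF a(1)] pcm_functor[OF a(2)] pcm_functor[OF a(3)] a(4,5)] a tt1 tt2
    by (simp add: PCMor_cmp PCMor_arr)
  then show "farr (evf D) (cmp (PCMor FinSet D) t2 t1) = cmp D (farr (evf D) t2) (farr (evf D) t1)"
    using t1 t2 tt1 tt2 by (simp add: evf_def PCMor_cmp star_def)
next
  fix F assume "F \<notin> obj (PCMor FinSet D)" thus "fobj (evf D) F = undefined" by (simp add: evf_def)
next
  fix t assume "t \<notin> arr (PCMor FinSet D)" thus "farr (evf D) t = undefined" by (simp add: evf_def)
qed

lemma thF_prop: assumes F: "pc_morphism FinSet D F" and S: "finite S"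
  shows "thF D F S \<in> hom D (fobj F S) (copP D (fobj F star) S)" "iso D (thF D F S)"
    "\<forall>s\<in>S. cmp D (thF D F S) (farr F (eS S s)) = copJ D (fobj F star) S s"
proof -
  have so: "fobj F star \<in> obj D" using pcm_star_obj[OF F] .
  note c = cop_compare_iso[OF pcm_cop[OF F S] cop_ok[OF so S]]
  show "thF D F S \<in> hom D (fobj F S) (copP D (fobj F star) S)" "iso D (thF D F S)"
    "\<forall>s\<in>S. cmp D (thF D F S) (farr F (eS S s)) = copJ D (fobj F star) S s"
    using c S by (simp_all add: thF_def)
qed

lemma thF_natural: assumes F: "pc_morphism FinSet D F" shows "natural FinSet D F (GF D (fobj F star)) (thF D F)"
  unfolding natural_def
proof (intro conjI ballI allI impI)
  fix S assume "S \<in> obj FinSet" thus "thF D F S \<in> hom D (fobj F S) (fobj (GF D (fobj F star)) S)"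
    using thF_prop[OF F] by (simp add: GF_def GFo_def)
next
  fix a assume a: "a \<in> arr FinSet"
  then obtain S T f where st: "a = (S,T,f)" by (cases a)
  have a': "(S,T,f) \<in> arr FinSet" using a st by simp
  have fin: "finite S" "finite T" "f \<in> S \<rightarrow>\<^sub>E T" using a' by (auto simp: FS_arr)
  have so: "fobj F star \<in> obj D" using pcm_star_obj[OF F] .
  note Ff = pcm_functor[OF F]
  have ah: "(S,T,f) \<in> hom FinSet S T" using a' by (simp add: hom_def)
  note FA = functor_hom[OF Ff ah] and GA = GFa_prop[OF so a'] and tS = thF_prop[OF F fin(1)] and tT = thF_prop[OF F fin(2)]
  have "cmp D (thF D F T) (farr F (S,T,f)) = cmp D (GFa D (fobj F star) (S,T,f)) (thF D F S)"
  proof (rule cop_ext[OF pcm_cop[OF F fin(1)]])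
    show "cmp D (thF D F T) (farr F (S,T,f)) \<in> hom D (fobj F S) (copP D (fobj F star) T)" using FA tT by auto
    show "cmp D (GFa D (fobj F star) (S,T,f)) (thF D F S) \<in> hom D (fobj F S) (copP D (fobj F star) T)" using GA tS by auto
    show "\<forall>s\<in>S. cmp D (cmp D (thF D F T) (farr F (S,T,f))) (farr F (eS S s)) = cmp D (cmp D (GFa D (fobj F star) (S,T,f)) (thF D F S)) (farr F (eS S s))"
    proof
      fix s assume s: "s \<in> S"
      have fs: "f s \<in> T" using fin s by auto
      have eh: "eS S s \<in> hom FinSet star S" using eS_hom[OF fin(1) s] .
      note Fe = functor_hom[OF Ff eh]
      have "cmp D (cmp D (thF D F T) (farr F (S,T,f))) (farr F (eS S s)) = cmp D (thF D F T) (cmp D (farr F (S,T,f)) (farr F (eS S s)))"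
        using assoc[OF Fe FA tT(1)] by simp
      also have "cmp D (farr F (S,T,f)) (farr F (eS S s)) = farr F (eS T (f s))"
        using functor_comp[OF Ff eh ah, symmetric] eS_comp[OF a' s] by simp
      also have "cmp D (thF D F T) (farr F (eS T (f s))) = copJ D (fobj F star) T (f s)" using tT(3) fs by simp
      finally have 1: "cmp D (cmp D (thF D F T) (farr F (S,T,f))) (farr F (eS S s)) = copJ D (fobj F star) T (f s)" .
      have "cmp D (cmp D (GFa D (fobj F star) (S,T,f)) (thF D F S)) (farr F (eS S s)) = cmp D (GFa D (fobj F star) (S,T,f)) (cmp D (thF D F S) (farr F (eS S s)))"
        using assoc[OF Fe tS(1) GA(1)] by simp
      also have "\<dots> = copJ D (fobj F star) T (f s)" using tS(3) GA(2)[OF s] s by simp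
      finally show "cmp D (cmp D (thF D F T) (farr F (S,T,f))) (farr F (eS S s)) = cmp D (cmp D (GFa D (fobj F star) (S,T,f)) (thF D F S)) (farr F (eS S s))"
        using 1 by simp
    qed
  qed
  thus "cmp D (thF D F (cod FinSet a)) (farr F a) = cmp D (farr (GF D (fobj F star)) a) (thF D F (dom FinSet a))"
    using st by (simp add: GF_def)
next
  fix S assume "S \<notin> obj FinSet" thus "thF D F S = undefined" by (simp add: thF_def)
qed

end


lemma finite_star[simp]: "finite star" by (simp add: star_def)

context pcc begin

lemma PCMor_cat_obj: "F \<in> obj (PCMor FinSet D) \<longleftrightarrow> pc_morphism FinSet D F" by (simp add: PCMor_obj)

lemma etaU_natiso: "natiso (PCMor FinSet D) (PCMor FinSet D) (idf (PCMor FinSet D)) (fcompose (PCMor FinSet D) (Gq D) (evf D)) (etaU D)"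
  unfolding natiso_def natural_def
proof (intro conjI ballI allI impI)
  fix F assume F: "F \<in> obj (PCMor FinSet D)"
  then have Fp: "pc_morphism FinSet D F" by (simp add: PCMor_obj)
  have so: "fobj F star \<in> obj D" using pcm_star_obj[OF Fp] .
  have e: "fobj (fcompose (PCMor FinSet D) (Gq D) (evf D)) F = GF D (fobj F star)" "fobj (idf (PCMor FinSet D)) F = F"
    using F so by (simp_all add: fcompose_def evf_def Gq_def idf_def)
  show "etaU D F \<in> hom (PCMor FinSet D) (fobj (idf (PCMor FinSet D)) F) (fobj (fcompose (PCMor FinSet D) (Gq D) (evf D)) F)"
    using e F Fp GF_pcm[OF so] thF_natural[OF Fp] by (simp add: etaU_def PCMor_hom)
  show "iso (PCMor FinSet D) (etaU D F)"
    using iso_natural[OF FS_category pcm_functor[OF Fp] GF_functor[OF so] thF_natural[OF Fp], of "{F. pc_morphism FinSet D F}"]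
      thF_prop(2)[OF Fp] Fp GF_pcm[OF so] F
    by (simp add: etaU_def PCMor_def)
next
  fix t assume t: "t \<in> arr (PCMor FinSet D)"
  then obtain F F' \<sigma> where tt: "t = (F,F',\<sigma>)" by (cases t)
  have a: "pc_morphism FinSet D F" "pc_morphism FinSet D F'" "natural FinSet D F F' \<sigma>" using t tt by (auto simp: PCMor_arr)
  have so: "fobj F star \<in> obj D" "fobj F' star \<in> obj D" using pcm_star_obj a by auto
  have sh: "\<sigma> star \<in> hom D (fobj F star) (fobj F' star)" using pcm_natural_hom[OF a(3)] by (simp add: star_def)
  have sa: "\<sigma> star \<in> arr D" "dom D (\<sigma> star) = fobj F star" "cod D (\<sigma> star) = fobj F' star" using sh by (auto simp: hom_def)
  have FF: "F \<in> obj (PCMor FinSet D)" "F' \<in> obj (PCMor FinSet D)" using a by (auto simp: PCMor_obj)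
  have lhs: "cmp (PCMor FinSet D) (etaU D (cod (PCMor FinSet D) t)) (farr (idf (PCMor FinSet D)) t)
     = (F, GF D (fobj F' star), \<lambda>S. if S \<in> obj FinSet then cmp D (thF D F' S) (\<sigma> S) else undefined)"
    using t tt FF by (simp add: idf_def etaU_def PCMor_cod PCMor_cmp)
  have rhs: "cmp (PCMor FinSet D) (farr (fcompose (PCMor FinSet D) (Gq D) (evf D)) t) (etaU D (dom (PCMor FinSet D) t))
     = (F, GF D (fobj F' star), \<lambda>S. if S \<in> obj FinSet then cmp D (Geta D (\<sigma> star) S) (thF D F S) else undefined)"
    using t tt FF sa by (simp add: fcompose_def evf_def Gq_def etaU_def PCMor_dom PCMor_cmp)
  have "(\<lambda>S. if S \<in> obj FinSet then cmp D (thF D F' S) (\<sigma> S) else undefined)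
      = (\<lambda>S. if S \<in> obj FinSet then cmp D (Geta D (\<sigma> star) S) (thF D F S) else undefined)"
  proof (rule ext)
    fix S show "(if S \<in> obj FinSet then cmp D (thF D F' S) (\<sigma> S) else undefined) = (if S \<in> obj FinSet then cmp D (Geta D (\<sigma> star) S) (thF D F S) else undefined)"
    proof (cases "S \<in> obj FinSet")
      case True
      then have S: "finite S" by simp
      note t1 = thF_prop[OF a(1) S] and t2 = thF_prop[OF a(2) S] and ge = Geta_prop[OF sh S]
      have sS: "\<sigma> S \<in> hom D (fobj F S) (fobj F' S)" using pcm_natural_hom[OF a(3) S] .
      have "cmp D (thF D F' S) (\<sigma> S) = cmp D (Geta D (\<sigma> star) S) (thF D F S)"
      proof (rule cop_ext[OF pcm_cop[OF a(1) S]])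
        show "cmp D (thF D F' S) (\<sigma> S) \<in> hom D (fobj F S) (copP D (fobj F' star) S)" using t2 sS by auto
        show "cmp D (Geta D (\<sigma> star) S) (thF D F S) \<in> hom D (fobj F S) (copP D (fobj F' star) S)" using t1 ge by auto
        show "\<forall>s\<in>S. cmp D (cmp D (thF D F' S) (\<sigma> S)) (farr F (eS S s)) = cmp D (cmp D (Geta D (\<sigma> star) S) (thF D F S)) (farr F (eS S s))"
        proof
          fix s assume s: "s \<in> S"
          have eh: "eS S s \<in> hom FinSet star S" using eS_hom[OF S s] .
          have ea: "eS S s \<in> arr FinSet" "dom FinSet (eS S s) = star" "cod FinSet (eS S s) = S" using eh by (auto simp: hom_def)
          note Fe = functor_hom[OF pcm_functor[OF a(1)] eh] and F'e = functor_hom[OF pcm_functor[OF a(2)] eh]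
          have nat: "cmp D (\<sigma> S) (farr F (eS S s)) = cmp D (farr F' (eS S s)) (\<sigma> star)"
            using a(3) ea unfolding natural_def by metis
          have "cmp D (cmp D (thF D F' S) (\<sigma> S)) (farr F (eS S s)) = cmp D (thF D F' S) (cmp D (\<sigma> S) (farr F (eS S s)))"
            using assoc[OF Fe sS t2(1)] by simp
          also have "\<dots> = cmp D (thF D F' S) (cmp D (farr F' (eS S s)) (\<sigma> star))" using nat by simp
          also have "\<dots> = cmp D (cmp D (thF D F' S) (farr F' (eS S s))) (\<sigma> star)" using assoc[OF sh F'e t2(1)] .
          also have "\<dots> = cmp D (copJ D (fobj F' star) S s) (\<sigma> star)" using t2(3) s by simp
          finally have 1: "cmp D (cmp D (thF D F' S) (\<sigma> S)) (farr F (eS S s)) = cmp D (copJ D (fobj F' star) S s) (\<sigma> star)" .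
          have "cmp D (cmp D (Geta D (\<sigma> star) S) (thF D F S)) (farr F (eS S s)) = cmp D (Geta D (\<sigma> star) S) (cmp D (thF D F S) (farr F (eS S s)))"
            using assoc[OF Fe t1(1) ge(1)] by simp
          also have "\<dots> = cmp D (copJ D (fobj F' star) S s) (\<sigma> star)" using t1(3) ge(2) s by simp
          finally show "cmp D (cmp D (thF D F' S) (\<sigma> S)) (farr F (eS S s)) = cmp D (cmp D (Geta D (\<sigma> star) S) (thF D F S)) (farr F (eS S s))"
            using 1 by simp
        qed
      qed
      then show ?thesis using True by simp
    qed simp
  qed
  then show "cmp (PCMor FinSet D) (etaU D (cod (PCMor FinSet D) t)) (farr (idf (PCMor FinSet D)) t) =
    cmp (PCMor FinSet D) (farr (fcompose (PCMor FinSet D) (Gq D) (evf D)) t) (etaU D (dom (PCMor FinSet D) t))"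
    using lhs rhs by simp
next
  fix F assume "F \<notin> obj (PCMor FinSet D)" thus "etaU D F = undefined" by (simp add: etaU_def)
qed

lemma Geta_star: assumes g: "g \<in> hom D X Y" shows "Geta D g star = g"
proof -
  have XY: "X \<in> obj D" "Y \<in> obj D" using hom_obj[OF g] by auto
  have "g = Geta D g star"
    by (rule Geta_unique[OF g]) (use g id_left[OF g] id_right[OF g] in \<open>simp_all add: copP_star\<close>)
  thus ?thesis by simp
qed

lemma eps_natiso: "natiso D D (fcompose D (evf D) (Gq D)) (idf D) (epsC D)"
  unfolding natiso_def natural_def
proof (intro conjI ballI allI impI)
  fix X assume X: "X \<in> obj D"
  have e: "fobj (fcompose D (evf D) (Gq D)) X = X" "fobj (idf D) X = X"
    using X GF_pcm[OF X] by (simp_all add: fcompose_def evf_def Gq_def idf_def PCMor_obj GF_def GFo_def copP_star)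
  show "epsC D X \<in> hom D (fobj (fcompose D (evf D) (Gq D)) X) (fobj (idf D) X)" using e X by (auto simp: epsC_def)
  show "iso D (epsC D X)" using iso_id[OF X] X by (simp add: epsC_def)
next
  fix g assume g: "g \<in> arr D"
  have gh: "g \<in> hom D (dom D g) (cod D g)" using g by (simp add: hom_def)
  have o: "dom D g \<in> obj D" "cod D g \<in> obj D" using hom_obj[OF gh] by auto
  have ga: "farr (Gq D) g \<in> arr (PCMor FinSet D)" using functor_hom[OF Gq_functor gh] by (simp add: hom_def)
  have "farr (fcompose D (evf D) (Gq D)) g = g"
    using g ga Geta_star[OF gh] by (simp add: fcompose_def evf_def Gq_def)
  then show "cmp D (epsC D (cod D g)) (farr (fcompose D (evf D) (Gq D)) g) = cmp D (farr (idf D) g) (epsC D (dom D g))"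
    using g o id_left[OF gh] id_right[OF gh] by (simp add: epsC_def idf_def)
next
  fix X assume "X \<notin> obj D" thus "epsC D X = undefined" by (simp add: epsC_def)
qed

lemma D_main: "is_functor (PCMor FinSet D) D (evf D) \<and>
       (\<exists>G. quasi_inverse (PCMor FinSet D) D (evf D) G \<and>
            (\<forall>X\<in>obj D. \<forall>S. finite S \<longrightarrow>
                (\<exists>j. coproduct D (\<lambda>s. X) S (fobj (fobj G X) S) j)))"
proof (intro conjI exI)
  show "is_functor (PCMor FinSet D) D (evf D)" by (rule evf_functor)
  show "quasi_inverse (PCMor FinSet D) D (evf D) (Gq D)"
    unfolding quasi_inverse_def using Gq_functor etaU_natiso eps_natiso by blast
  show "\<forall>X\<in>obj D. \<forall>S. finite S \<longrightarrow> (\<exists>j. coproduct D (\<lambda>s. X) S (fobj (fobj (Gq D) X) S) j)"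
    using cop_ok by (auto simp: Gq_def GF_def GFo_def)
qed

end


lemma pcm_comp:
  fixes D :: "('o,'a) pccat" and E :: "('o2,'a2) pccat"
  assumes C: "pre_cylinder_category FinSet" and pD: "pre_cylinder_category D" and pE: "pre_cylinder_category E"
    and F: "pc_morphism FinSet D F" and H: "pc_morphism D E H"
  shows "pc_morphism FinSet E (fcompose FinSet H F)"
proof -
  interpret d: pcc D by (rule pcc.intro[OF pD])
  interpret e: pcc E by (rule pcc.intro[OF pE])
  have Ff: "is_functor FinSet D F" and Hf: "is_functor D E H" using F H unfolding pc_morphism_def by auto
  have FG: "is_functor FinSet E (fcompose FinSet H F)"
    unfolding is_functor_def
  proof (intro conjI ballI allI impI)
    fix X assume "X \<in> obj FinSet" thus "fobj (fcompose FinSet H F) X \<in> obj E"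
      using Ff Hf unfolding is_functor_def by (simp add: fcompose_def)
  next
    fix f assume f: "f \<in> arr FinSet"
    have fh: "f \<in> hom FinSet (dom FinSet f) (cod FinSet f)" using f by (simp add: hom_def)
    have o: "dom FinSet f \<in> obj FinSet" "cod FinSet f \<in> obj FinSet" using FSC f cat.hom_obj[OF FSC fh] by auto
    show "farr (fcompose FinSet H F) f \<in> hom E (fobj (fcompose FinSet H F) (dom FinSet f)) (fobj (fcompose FinSet H F) (cod FinSet f))"
      using functor_hom[OF Hf functor_hom[OF Ff fh]] f o by (simp add: fcompose_def)
  next
    fix X assume X: "X \<in> obj FinSet"
    have "idt FinSet X \<in> arr FinSet" using X by (simp add: FS_arr)
    moreover have "fobj F X \<in> obj D" using Ff X unfolding is_functor_def by auto
    ultimately show "farr (fcompose FinSet H F) (idt FinSet X) = idt E (fobj (fcompose FinSet H F) X)"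
      using functor_id[OF Ff X] functor_id[OF Hf] X by (simp add: fcompose_def)
  next
    fix f g assume f: "f \<in> arr FinSet" and g: "g \<in> arr FinSet" and fg: "cod FinSet f = dom FinSet g"
    have fh: "f \<in> hom FinSet (dom FinSet f) (cod FinSet f)" and gh: "g \<in> hom FinSet (cod FinSet f) (cod FinSet g)"
      using f g fg by (auto simp: hom_def)
    have gfa: "cmp FinSet g f \<in> arr FinSet" using cat.comp_hom[OF FSC fh gh] by (simp add: hom_def)
    show "farr (fcompose FinSet H F) (cmp FinSet g f) = cmp E (farr (fcompose FinSet H F) g) (farr (fcompose FinSet H F) f)"
      using functor_comp[OF Ff fh gh] functor_comp[OF Hf functor_hom[OF Ff fh] functor_hom[OF Ff gh]] f g gfa
      by (simp add: fcompose_def)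
  next
    fix X assume "X \<notin> obj FinSet" thus "fobj (fcompose FinSet H F) X = undefined" by (simp add: fcompose_def)
  next
    fix f assume "f \<notin> arr FinSet" thus "farr (fcompose FinSet H F) f = undefined" by (simp add: fcompose_def)
  qed
  show ?thesis unfolding pc_morphism_def
  proof (intro conjI allI ballI impI)
    show "is_functor FinSet E (fcompose FinSet H F)" by (rule FG)
  next
    fix f assume f: "f \<in> cof FinSet"
    then have "f \<in> arr FinSet" using FS_cof_arr by auto
    thus "farr (fcompose FinSet H F) f \<in> cof E" using F H f unfolding pc_morphism_def by (simp add: fcompose_def)
  next
    fix f assume f: "f \<in> weq FinSet"
    then have "f \<in> arr FinSet" using FS_weq_arr by auto
    thus "farr (fcompose FinSet H F) f \<in> weq E" using F H f unfolding pc_morphism_def by (simp add: fcompose_def)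
  next
    fix I assume I: "initial FinSet I"
    then have "I \<in> obj FinSet" unfolding initial_def by simp
    thus "initial E (fobj (fcompose FinSet H F) I)" using F H I unfolding pc_morphism_def by (simp add: fcompose_def)
  next
    fix i f j k assume po: "pushout FinSet i f j k" and ic: "i \<in> cof FinSet"
    have a: "i \<in> arr FinSet" "f \<in> arr FinSet" "j \<in> arr FinSet" "k \<in> arr FinSet" using po unfolding pushout_def by auto
    have po1: "pushout D (farr F i) (farr F f) (farr F j) (farr F k)" using F po ic unfolding pc_morphism_def by blast
    have ic1: "farr F i \<in> cof D" using F ic unfolding pc_morphism_def by blast
    have "pushout E (farr H (farr F i)) (farr H (farr F f)) (farr H (farr F j)) (farr H (farr F k))"
      using H po1 ic1 unfolding pc_morphism_def by blast
    thus "pushout E (farr (fcompose FinSet H F) i) (farr (fcompose FinSet H F) f) (farr (fcompose FinSet H F) j) (farr (fcompose FinSet H F) k)"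
      using a by (simp add: fcompose_def)
  qed
qed

lemma postc_farr: "(F,G,\<eta>) \<in> arr (PCMor FinSet D) \<Longrightarrow>
  farr (postc D D' H) (F,G,\<eta>) = (fcompose FinSet H F, fcompose FinSet H G, \<lambda>X. if X \<in> obj FinSet then farr H (\<eta> X) else undefined)"
  by (simp add: postc_def) (simp only: snd_conv)

lemma postc_part:
  fixes D :: "('o,'a) pccat" and D' :: "('o2,'a2) pccat"
  assumes pD: "pre_cylinder_category D" and pD': "pre_cylinder_category D'" and H: "pc_morphism D D' H"
  shows "is_functor (PCMor FinSet D) (PCMor FinSet D') (postc D D' H) \<and>
       fcompose (PCMor FinSet D) (evf D') (postc D D' H) = fcompose (PCMor FinSet D) H (evf D)"
proof -
  interpret d: pcc D by (rule pcc.intro[OF pD])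
  interpret d': pcc D' by (rule pcc.intro[OF pD'])
  have Hf: "is_functor D D' H" using H unfolding pc_morphism_def by auto
  have comp_pcm: "pc_morphism FinSet D' (fcompose FinSet H F)" if "pc_morphism FinSet D F" for F
    using pcm_comp[OF FS_precyl pD pD' that H] .
  have fcF: "fobj (fcompose FinSet H F) X = fobj H (fobj F X)" "farr (fcompose FinSet H F) a = farr H (farr F a)"
    if "X \<in> obj FinSet" "a \<in> arr FinSet" for F X a using that by (simp_all add: fcompose_def)
  have postc_nat: "natural FinSet D' (fcompose FinSet H F) (fcompose FinSet H G) (\<lambda>X. if X \<in> obj FinSet then farr H (\<eta> X) else undefined)"
    if F: "pc_morphism FinSet D F" and G: "pc_morphism FinSet D G" and n: "natural FinSet D F G \<eta>" for F G \<eta>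
    unfolding natural_def
  proof (intro conjI ballI allI impI)
    fix X assume X: "X \<in> obj FinSet"
    show "(if X \<in> obj FinSet then farr H (\<eta> X) else undefined) \<in> hom D' (fobj (fcompose FinSet H F) X) (fobj (fcompose FinSet H G) X)"
      using X functor_hom[OF Hf] n unfolding natural_def by (simp add: fcompose_def)
  next
    fix f assume f: "f \<in> arr FinSet"
    have fh: "f \<in> hom FinSet (dom FinSet f) (cod FinSet f)" using f by (simp add: hom_def)
    have o: "dom FinSet f \<in> obj FinSet" "cod FinSet f \<in> obj FinSet" using cat.hom_obj[OF FSC fh] by auto
    have e: "\<eta> (dom FinSet f) \<in> hom D (fobj F (dom FinSet f)) (fobj G (dom FinSet f))"
      "\<eta> (cod FinSet f) \<in> hom D (fobj F (cod FinSet f)) (fobj G (cod FinSet f))" using n o unfolding natural_def by auto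
    have nn: "cmp D (\<eta> (cod FinSet f)) (farr F f) = cmp D (farr G f) (\<eta> (dom FinSet f))" using n f unfolding natural_def by auto
    have Ffh: "farr F f \<in> hom D (fobj F (dom FinSet f)) (fobj F (cod FinSet f))" using functor_hom[OF d.pcm_functor[OF F] fh] .
    have Gfh: "farr G f \<in> hom D (fobj G (dom FinSet f)) (fobj G (cod FinSet f))" using functor_hom[OF d.pcm_functor[OF G] fh] .
    have "cmp D' (farr H (\<eta> (cod FinSet f))) (farr H (farr F f)) = farr H (cmp D (\<eta> (cod FinSet f)) (farr F f))"
      using functor_comp[OF Hf Ffh e(2)] by simp
    also have "\<dots> = farr H (cmp D (farr G f) (\<eta> (dom FinSet f)))" using nn by simp
    also have "\<dots> = cmp D' (farr H (farr G f)) (farr H (\<eta> (dom FinSet f)))" using functor_comp[OF Hf e(1) Gfh] .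
    finally show "cmp D' (if cod FinSet f \<in> obj FinSet then farr H (\<eta> (cod FinSet f)) else undefined) (farr (fcompose FinSet H F) f) =
      cmp D' (farr (fcompose FinSet H G) f) (if dom FinSet f \<in> obj FinSet then farr H (\<eta> (dom FinSet f)) else undefined)"
      using o f by (simp add: fcompose_def)
  next
    fix X assume "X \<notin> obj FinSet" thus "(if X \<in> obj FinSet then farr H (\<eta> X) else undefined) = undefined" by simp
  qed
  have PF: "is_functor (PCMor FinSet D) (PCMor FinSet D') (postc D D' H)"
    unfolding is_functor_def
  proof (intro conjI ballI allI impI)
    fix F assume "F \<in> obj (PCMor FinSet D)"
    thus "fobj (postc D D' H) F \<in> obj (PCMor FinSet D')" using comp_pcm by (simp add: postc_def PCMor_obj)
  next
    fix t assume t: "t \<in> arr (PCMor FinSet D)"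
    obtain F G \<eta> where tt: "t = (F,G,\<eta>)" by (cases t)
    have a: "pc_morphism FinSet D F" "pc_morphism FinSet D G" "natural FinSet D F G \<eta>" using t tt by (auto simp: PCMor_arr)
    show "farr (postc D D' H) t \<in> hom (PCMor FinSet D') (fobj (postc D D' H) (dom (PCMor FinSet D) t)) (fobj (postc D D' H) (cod (PCMor FinSet D) t))"
    proof -
      have pt: "farr (postc D D' H) t = (fcompose FinSet H F, fcompose FinSet H G, \<lambda>X. if X \<in> obj FinSet then farr H (\<eta> X) else undefined)"
        using t tt by (simp add: postc_def) (simp only: snd_conv)
      show ?thesis unfolding pt using t tt a comp_pcm postc_nat[OF a] by (simp add: postc_def PCMor_hom PCMor_obj PCMor_dom PCMor_cod)
    qed
  next
    fix F assume F: "F \<in> obj (PCMor FinSet D)"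
    then have Fp: "pc_morphism FinSet D F" by (simp add: PCMor_obj)
    have ia: "idt (PCMor FinSet D) F \<in> arr (PCMor FinSet D)"
      using d.id_natural[OF FS_category d.pcm_functor[OF Fp]] Fp by (simp add: PCMor_idt PCMor_arr)
    have idlam: "(\<lambda>X. if X \<in> obj FinSet then farr H (if X \<in> obj FinSet then idt D (fobj F X) else undefined) else undefined)
        = (\<lambda>X. if X \<in> obj FinSet then idt D' (fobj (fcompose FinSet H F) X) else undefined)"
    proof (rule ext)
      fix X show "(if X \<in> obj FinSet then farr H (if X \<in> obj FinSet then idt D (fobj F X) else undefined) else undefined)
        = (if X \<in> obj FinSet then idt D' (fobj (fcompose FinSet H F) X) else undefined)"
      proof (cases "X \<in> obj FinSet")
        case True
        have "fobj F X \<in> obj D" using d.pcm_functor[OF Fp] True unfolding is_functor_def by auto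
        then show ?thesis using True functor_id[OF Hf] by (simp add: fcompose_def)
      qed simp
    qed
    have ia': "(F,F,\<lambda>X. if X \<in> obj FinSet then idt D (fobj F X) else undefined) \<in> arr (PCMor FinSet D)"
      using ia by (simp only: PCMor_idt)
    show "farr (postc D D' H) (idt (PCMor FinSet D) F) = idt (PCMor FinSet D') (fobj (postc D D' H) F)"
    proof -
      have pF: "fobj (postc D D' H) F = fcompose FinSet H F" using F by (simp add: postc_def)
      show ?thesis unfolding PCMor_idt postc_farr[OF ia'] pF using idlam by simp
    qed
  next
    fix t1 t2 assume t1: "t1 \<in> arr (PCMor FinSet D)" and t2: "t2 \<in> arr (PCMor FinSet D)"
      and c: "cod (PCMor FinSet D) t1 = dom (PCMor FinSet D) t2"
    obtain F G \<eta> where tt1: "t1 = (F,G,\<eta>)" by (cases t1)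
    obtain G' K \<theta> where tt2: "t2 = (G',K,\<theta>)" by (cases t2)
    have GG: "G' = G" using c tt1 tt2 by (simp add: PCMor_dom PCMor_cod)
    have a: "pc_morphism FinSet D F" "pc_morphism FinSet D G" "pc_morphism FinSet D K" "natural FinSet D F G \<eta>" "natural FinSet D G K \<theta>"
      using t1 t2 tt1 tt2 GG by (auto simp: PCMor_arr)
    have ca: "cmp (PCMor FinSet D) t2 t1 \<in> arr (PCMor FinSet D)"
      using d.comp_natural[OF FS_category d.pcm_functor[OF a(1)] d.pcm_functor[OF a(2)] d.pcm_functor[OF a(3)] a(4,5)] a tt1 tt2
      by (simp add: PCMor_cmp PCMor_arr)
    have "(\<lambda>X. if X \<in> obj FinSet then farr H (if X \<in> obj FinSet then cmp D (\<theta> X) (\<eta> X) else undefined) else undefined)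
      = (\<lambda>X. if X \<in> obj FinSet then cmp D' (if X \<in> obj FinSet then farr H (\<theta> X) else undefined) (if X \<in> obj FinSet then farr H (\<eta> X) else undefined) else undefined)"
    proof (rule ext)
      fix X show "(if X \<in> obj FinSet then farr H (if X \<in> obj FinSet then cmp D (\<theta> X) (\<eta> X) else undefined) else undefined)
      = (if X \<in> obj FinSet then cmp D' (if X \<in> obj FinSet then farr H (\<theta> X) else undefined) (if X \<in> obj FinSet then farr H (\<eta> X) else undefined) else undefined)"
      proof (cases "X \<in> obj FinSet")
        case True
        have "\<eta> X \<in> hom D (fobj F X) (fobj G X)" "\<theta> X \<in> hom D (fobj G X) (fobj K X)" using a(4,5) True unfolding natural_def by auto
        then show ?thesis using True functor_comp[OF Hf] by simp
      qed simp
    qed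
    moreover have ca': "(F,K,\<lambda>X. if X \<in> obj FinSet then cmp D (\<theta> X) (\<eta> X) else undefined) \<in> arr (PCMor FinSet D)"
      using ca tt1 tt2 by (simp only: PCMor_cmp)
    moreover have "t1 = (F,G,\<eta>)" "t2 = (G,K,\<theta>)" using tt1 tt2 GG by auto
    ultimately show "farr (postc D D' H) (cmp (PCMor FinSet D) t2 t1) = cmp (PCMor FinSet D') (farr (postc D D' H) t2) (farr (postc D D' H) t1)"
      using t1 t2 by (simp only: PCMor_cmp postc_farr)
  next
    fix F assume "F \<notin> obj (PCMor FinSet D)" thus "fobj (postc D D' H) F = undefined" by (simp add: postc_def)
  next
    fix t assume "t \<notin> arr (PCMor FinSet D)" thus "farr (postc D D' H) t = undefined" by (simp add: postc_def)
  qed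
  have eq: "fcompose (PCMor FinSet D) (evf D') (postc D D' H) = fcompose (PCMor FinSet D) H (evf D)"
    unfolding fcompose_def
  proof (rule prod_eqI)
    show "fst (\<lambda>X. if X \<in> obj (PCMor FinSet D) then fobj (evf D') (fobj (postc D D' H) X) else undefined,
          \<lambda>f. if f \<in> arr (PCMor FinSet D) then farr (evf D') (farr (postc D D' H) f) else undefined) =
          fst (\<lambda>X. if X \<in> obj (PCMor FinSet D) then fobj H (fobj (evf D) X) else undefined,
          \<lambda>f. if f \<in> arr (PCMor FinSet D) then farr H (farr (evf D) f) else undefined)"
    proof (simp only: fst_conv, rule ext)
      fix F show "(if F \<in> obj (PCMor FinSet D) then fobj (evf D') (fobj (postc D D' H) F) else undefined) =
                  (if F \<in> obj (PCMor FinSet D) then fobj H (fobj (evf D) F) else undefined)"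
      proof (cases "F \<in> obj (PCMor FinSet D)")
        case True
        then have Fp: "pc_morphism FinSet D F" by (simp add: PCMor_obj)
        have "fobj (postc D D' H) F \<in> obj (PCMor FinSet D')" using comp_pcm[OF Fp] True by (simp add: postc_def PCMor_obj)
        then show ?thesis using True by (simp add: evf_def postc_def fcompose_def)
      qed simp
    qed
    show "snd (\<lambda>X. if X \<in> obj (PCMor FinSet D) then fobj (evf D') (fobj (postc D D' H) X) else undefined,
          \<lambda>f. if f \<in> arr (PCMor FinSet D) then farr (evf D') (farr (postc D D' H) f) else undefined) =
          snd (\<lambda>X. if X \<in> obj (PCMor FinSet D) then fobj H (fobj (evf D) X) else undefined,
          \<lambda>f. if f \<in> arr (PCMor FinSet D) then farr H (farr (evf D) f) else undefined)"
    proof (simp only: snd_conv, rule ext)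
      fix t show "(if t \<in> arr (PCMor FinSet D) then farr (evf D') (farr (postc D D' H) t) else undefined) =
                  (if t \<in> arr (PCMor FinSet D) then farr H (farr (evf D) t) else undefined)"
      proof (cases "t \<in> arr (PCMor FinSet D)")
        case True
        obtain F G \<eta> where tt: "t = (F,G,\<eta>)" by (cases t)
        have "farr (postc D D' H) t \<in> arr (PCMor FinSet D')" using functor_hom[OF PF homI[OF True refl refl]] by (simp add: hom_def)
        then show ?thesis using True postc_farr[of F G \<eta> D D' H] unfolding tt by (simp add: evf_def)
      qed simp
    qed
  qed
  show ?thesis using PF eq by simp
qed

theorem mainTheorem11:
  shows "pre_cylinder_category FinSet \<and>
    (\<forall>D :: ('o,'a) pccat. pre_cylinder_category D \<longrightarrow>
       is_functor (PCMor FinSet D) D (evf D) \<and>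
       (\<exists>G. quasi_inverse (PCMor FinSet D) D (evf D) G \<and>
            (\<forall>X\<in>obj D. \<forall>S. finite S \<longrightarrow>
                (\<exists>j. coproduct D (\<lambda>s. X) S (fobj (fobj G X) S) j)))) \<and>
    (\<forall>(D :: ('o,'a) pccat) (D' :: ('o2,'a2) pccat) H.
       pre_cylinder_category D \<longrightarrow> pre_cylinder_category D' \<longrightarrow> pc_morphism D D' H \<longrightarrow>
       is_functor (PCMor FinSet D) (PCMor FinSet D') (postc D D' H) \<and>
       fcompose (PCMor FinSet D) (evf D') (postc D D' H) = fcompose (PCMor FinSet D) H (evf D))"
proof (intro conjI allI impI)
  show "pre_cylinder_category FinSet" by (rule FS_precyl)
next
  fix D :: "('o,'a) pccat" assume "pre_cylinder_category D"
  then interpret d: pcc D by (rule pcc.intro)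
  show "is_functor (PCMor FinSet D) D (evf D)" using d.D_main by blast
  show "\<exists>G. quasi_inverse (PCMor FinSet D) D (evf D) G \<and>
            (\<forall>X\<in>obj D. \<forall>S. finite S \<longrightarrow> (\<exists>j. coproduct D (\<lambda>s. X) S (fobj (fobj G X) S) j))"
    using d.D_main by blast
next
  fix D :: "('o,'a) pccat" and D' :: "('o2,'a2) pccat" and H
  assume "pre_cylinder_category D" "pre_cylinder_category D'" "pc_morphism D D' H"
  from postc_part[OF this]
  show "is_functor (PCMor FinSet D) (PCMor FinSet D') (postc D D' H)"
    "fcompose (PCMor FinSet D) (evf D') (postc D D' H) = fcompose (PCMor FinSet D) H (evf D)" by auto
qed


end
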